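(* Let $\{g(\cdot,\theta):\theta\ge 0\}$ be a family of probability densities on $[0,\infty)$ with distribution functions $G(\cdot,\theta)$, such that $g(x,0)=e^{-x}$ and the family is regular in the sense that $g$ is differentiable in $\theta$ and differentiation with respect to $\theta$ under all integrals appearing below is permitted. Put $h(x)=\frac{\partial}{\partial\theta}g(x,\theta)\big|_{\theta=0}$. Let $b(\theta)$ be the limit in probability of the statistic $I_n$ (defined in the context) when $X_1,X_2,\dots$ are i.i.d. with density $g(\cdot,\theta)$; equivalently $$b(\theta)=P\{\max(X_2,X_3,X_4)<X_5\}-P\{X_1+\mathrm{med}(X_2,X_3,X_4)<X_5\}$$ with $X_1,\dots,X_5$ i.i.d. with density $g(\cdot,\theta)$. Then $$b(\theta)=5\theta\int_0^\infty \psi(x)h(x)\,dx+o(\theta),\qquad \theta\to 0,$$ where $\psi(s)=-\frac{1}{20}+\frac{2}{5}e^{-3s}-\frac{9}{10}e^{-2s}+\frac{1}{2}e^{-s}$.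
   Context: For i.i.d. non-negative observations $X_1,\dots,X_n$ with empirical distribution function $F_n$, define $$G_n(t)=\frac{1}{n^4}\sum_{i,j,k,l=1}^n I\{X_i+\mathrm{med}(X_j,X_k,X_l)<t\},\qquad H_n(t)=\frac{1}{n^3}\sum_{j,k,l=1}^n I\{\max(X_j,X_k,X_l)<t\},$$ ($\mathrm{med}$ = median of three numbers) and $I_n=\int_0^\infty (H_n(t)-G_n(t))\,dF_n(t)$. The function $\psi$ is the projection $\psi(s)=E[\Psi(X_1,\dots,X_5)\mid X_1=s]$ under i.i.d. standard exponential $X_i$ of the symmetrized kernel $\Psi=\frac{1}{5!}\sum_{\pi}\big(I\{\max(X_{\pi_2},X_{\pi_3},X_{\pi_4})<X_{\pi_5}\}-I\{X_{\pi_1}+\mathrm{med}(X_{\pi_2},X_{\pi_3},X_{\pi_4})<X_{\pi_5}\}\big)$, the sum being over all permutations $\pi$ of $\{1,\dots,5\}$. *)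

theory Defs
  imports "HOL-Probability.Probability" "HOL-Library.Landau_Symbols"
begin

definition med3 :: "real \<Rightarrow> real \<Rightarrow> real \<Rightarrow> real" where
  "med3 a b c = max (min a b) (min (max a b) c)"

definition psi :: "real \<Rightarrow> real" where
  "psi s = - (1/20) + (2/5) * exp (- (3 * s)) - (9/10) * exp (- (2 * s)) + (1/2) * exp (- s)"

text \<open>Joint law of X_1,...,X_5 (indices 0..4) i.i.d. with density g(.,theta).\<close>
definition sample5 :: "(real \<Rightarrow> real \<Rightarrow> real) \<Rightarrow> real \<Rightarrow> (nat \<Rightarrow> real) measure" where
  "sample5 g \<theta> = PiM {..<5} (\<lambda>_. density lborel (\<lambda>x. ennreal (g x \<theta>)))"

definition evA :: "(nat \<Rightarrow> real) set" where
  "evA = {\<omega>. max (\<omega> 1) (max (\<omega> 2) (\<omega> 3)) < \<omega> 4}"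

definition evB :: "(nat \<Rightarrow> real) set" where
  "evB = {\<omega>. \<omega> 0 + med3 (\<omega> 1) (\<omega> 2) (\<omega> 3) < \<omega> 4}"

definition prob5 :: "(real \<Rightarrow> real \<Rightarrow> real) \<Rightarrow> real \<Rightarrow> (nat \<Rightarrow> real) set \<Rightarrow> real" where
  "prob5 g \<theta> E = measure (sample5 g \<theta>) (E \<inter> space (sample5 g \<theta>))"

definition bfun :: "(real \<Rightarrow> real \<Rightarrow> real) \<Rightarrow> real \<Rightarrow> real" where
  "bfun g \<theta> = prob5 g \<theta> evA - prob5 g \<theta> evB"

text \<open>theta-derivative at 0 of the joint density prod_i g(x_i,theta) (product rule),
  given h = d/dtheta g(.,theta) at 0.\<close>
definition dens_deriv :: "(real \<Rightarrow> real \<Rightarrow> real) \<Rightarrow> (real \<Rightarrow> real) \<Rightarrow> (nat \<Rightarrow> real) \<Rightarrow> real" where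
  "dens_deriv g h \<omega> = (\<Sum>i<5. h (\<omega> i) * (\<Prod>j\<in>{..<5} - {i}. g (\<omega> j) 0))"

end

theory Submission
  imports Defs "HOL-Real_Asymp.Real_Asymp"
begin

definition ex :: "real \<Rightarrow> real" where "ex x = (if 0 \<le> x then exp (-x) else 0)"

lemma ex_nonneg[simp]: "0 \<le> ex x" by (simp add: ex_def)
lemma ex_le1: "ex x \<le> 1" by (simp add: ex_def)
lemma ex_meas[measurable]: "ex \<in> borel_measurable borel" unfolding ex_def by measurable

definition Fc :: "real \<Rightarrow> real" where "Fc c = 1 - exp (- max c 0)"

lemma Fc_nonneg[simp]: "0 \<le> Fc c" by (simp add: Fc_def)
lemma Fc_le1[simp]: "Fc c \<le> 1" by (simp add: Fc_def)
lemma Fc_meas[measurable]: "Fc \<in> borel_measurable borel" unfolding Fc_def by measurable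

lemma FTC_ray:
  fixes f F :: "real \<Rightarrow> real"
  assumes "f \<in> borel_measurable borel" "\<And>x. a \<le> x \<Longrightarrow> DERIV F x :> f x"
    "\<And>x. a \<le> x \<Longrightarrow> 0 \<le> f x" "(F \<longlongrightarrow> T) at_top"
  shows "(\<integral>\<^sup>+x. ennreal (f x * indicator {a..} x) \<partial>lborel) = ennreal (T - F a)"
proof -
  have "(\<integral>\<^sup>+x. ennreal (f x * indicator {a..} x) \<partial>lborel) = (\<integral>\<^sup>+x. ennreal (f x) * indicator {a..} x \<partial>lborel)"
    by (intro nn_integral_cong) (auto split: split_indicator)
  also have "\<dots> = ennreal (T - F a)" by (rule nn_integral_FTC_atLeast[OF assms])
  finally show ?thesis .
qed

lemma FTC_seg:
  fixes f F :: "real \<Rightarrow> real"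
  assumes "f \<in> borel_measurable borel" "\<And>x. x \<in> {a..b} \<Longrightarrow> DERIV F x :> f x"
    "\<And>x. x \<in> {a..b} \<Longrightarrow> 0 \<le> f x" "a \<le> b"
  shows "(\<integral>\<^sup>+x. ennreal (f x * indicator {a..b} x) \<partial>lborel) = ennreal (F b - F a)"
proof -
  have "(\<integral>\<^sup>+x. ennreal (f x * indicator {a..b} x) \<partial>lborel) = (\<integral>\<^sup>+x. ennreal (f x) * indicator {a..b} x \<partial>lborel)"
    by (intro nn_integral_cong) (auto split: split_indicator)
  also have "\<dots> = ennreal (F b - F a)" by (rule nn_integral_FTC_Icc[OF assms])
  finally show ?thesis .
qed

lemma nn_ex: "(\<integral>\<^sup>+x. ennreal (ex x) \<partial>lborel) = 1"
proof -
  have "(\<integral>\<^sup>+x. ennreal (ex x) \<partial>lborel) = (\<integral>\<^sup>+x. ennreal (exp (-x) * indicator {0..} x) \<partial>lborel)"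
    by (intro nn_integral_cong) (auto simp: ex_def split: split_indicator)
  also have "\<dots> = ennreal (0 - (- exp (- 0)))"
    by (rule FTC_ray[where F="\<lambda>x. - exp (-x)"]) (auto intro!: derivative_eq_intros, real_asymp)
  finally show ?thesis by simp
qed

lemma nn_ex_lt: "(\<integral>\<^sup>+x. ennreal (ex x * indicator {..<c} x) \<partial>lborel) = ennreal (Fc c)"
proof (cases "c \<le> 0")
  case True
  have "(\<integral>\<^sup>+x. ennreal (ex x * indicator {..<c} x) \<partial>lborel) = (\<integral>\<^sup>+(x::real). 0 \<partial>lborel)"
    by (intro nn_integral_cong) (use True in \<open>auto simp: ex_def split: split_indicator\<close>)
  then show ?thesis using True by (simp add: Fc_def)
next
  case False
  have "(\<integral>\<^sup>+x. ennreal (ex x * indicator {..<c} x) \<partial>lborel) = (\<integral>\<^sup>+x. ennreal (exp (-x) * indicator {0..c} x) \<partial>lborel)"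
    by (intro nn_integral_cong_AE, rule AE_I'[where N="{c}"]) (auto simp: ex_def split: split_indicator)
  also have "\<dots> = ennreal (- exp (-c) - (- exp (- 0)))"
    by (rule FTC_seg[where F="\<lambda>x. - exp (-x)"]) (use False in \<open>auto intro!: derivative_eq_intros\<close>)
  finally show ?thesis using False by (simp add: Fc_def)
qed

lemma nn_ex_ge: "(\<integral>\<^sup>+x. ennreal (ex x * indicator {c..} x) \<partial>lborel) = ennreal (1 - Fc c)"
proof (cases "c \<le> 0")
  case True
  have "(\<integral>\<^sup>+x. ennreal (ex x * indicator {c..} x) \<partial>lborel) = (\<integral>\<^sup>+x. ennreal (ex x) \<partial>lborel)"
    by (intro nn_integral_cong) (use True in \<open>auto simp: ex_def split: split_indicator\<close>)
  then show ?thesis using True by (simp add: Fc_def nn_ex)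
next
  case False
  have "(\<integral>\<^sup>+x. ennreal (ex x * indicator {c..} x) \<partial>lborel) = (\<integral>\<^sup>+x. ennreal (exp (-x) * indicator {c..} x) \<partial>lborel)"
    using False by (intro nn_integral_cong) (auto simp: ex_def split: split_indicator)
  also have "\<dots> = ennreal (0 - (- exp (- c)))"
    by (rule FTC_ray[where F="\<lambda>x. - exp (-x)"]) (auto intro!: derivative_eq_intros, real_asymp)
  finally show ?thesis using False by (simp add: Fc_def)
qed

lemma psf: "product_sigma_finite (\<lambda>_::nat. lborel::real measure)"
  by (simp add: product_sigma_finite_def lborel.sigma_finite_measure_axioms)

lemma ins_rev:
  assumes "finite I" "i \<notin> I" "f \<in> borel_measurable (PiM (insert i I) (\<lambda>_::nat. lborel::real measure))"
  shows "integral\<^sup>N (PiM (insert i I) (\<lambda>_. lborel)) f = (\<integral>\<^sup>+ y. (\<integral>\<^sup>+ x. f (x(i := y)) \<partial>(PiM I (\<lambda>_. lborel))) \<partial>lborel)"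
  using product_sigma_finite.product_nn_integral_insert_rev[OF psf assms] .

lemma nn_prod:
  assumes "finite I" "\<And>i x. i \<in> I \<Longrightarrow> 0 \<le> f i x" "\<And>i. i \<in> I \<Longrightarrow> f i \<in> borel_measurable borel"
  shows "(\<integral>\<^sup>+ x. ennreal (\<Prod>i\<in>I. f i (x i)) \<partial>PiM I (\<lambda>_::nat. lborel::real measure)) = (\<Prod>i\<in>I. \<integral>\<^sup>+ x. ennreal (f i x) \<partial>lborel)"
proof -
  have "(\<integral>\<^sup>+ x. ennreal (\<Prod>i\<in>I. f i (x i)) \<partial>PiM I (\<lambda>_::nat. lborel::real measure)) = (\<integral>\<^sup>+ x. (\<Prod>i\<in>I. ennreal (f i (x i))) \<partial>PiM I (\<lambda>_::nat. lborel::real measure))"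
    using assms by (intro nn_integral_cong) (simp add: prod_ennreal)
  also have "\<dots> = (\<Prod>i\<in>I. \<integral>\<^sup>+ x. ennreal (f i x) \<partial>lborel)"
    using assms by (intro product_sigma_finite.product_nn_integral_prod[OF psf]) auto
  finally show ?thesis .
qed


lemma set5_0: "{..<5::nat} - {0} = insert 4 {1,2,3}" by auto

lemma PA0: "(\<integral>\<^sup>+x. ennreal (indicator evA (x(0:=s)) * (\<Prod>j\<in>{..<5}-{0}. ex (x j))) \<partial>PiM ({..<5}-{0}) (\<lambda>_. lborel)) = ennreal (1/4)"
proof -
  let ?M = "PiM (insert 4 {1,2,3::nat}) (\<lambda>_. lborel::real measure)"
  have "(\<integral>\<^sup>+x. ennreal (indicator evA (x(0:=s)) * (\<Prod>j\<in>{..<5}-{0}. ex (x j))) \<partial>PiM ({..<5}-{0}) (\<lambda>_. lborel))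
     = (\<integral>\<^sup>+x. ennreal ((if max (x 1) (max (x 2) (x 3)) < x 4 then 1 else 0) * (ex (x 4) * (ex (x 1) * (ex (x 2) * ex (x 3))))) \<partial>?M)"
    unfolding set5_0 by (intro nn_integral_cong) (simp add: evA_def indicator_def)
  also have "\<dots> = (\<integral>\<^sup>+ t. (\<integral>\<^sup>+ x. ennreal (ex t) * ennreal (\<Prod>j\<in>{1,2,3::nat}. ex (x j) * indicator {..<t} (x j)) \<partial>PiM {1,2,3::nat} (\<lambda>_. lborel)) \<partial>lborel)"
    by (subst ins_rev) (auto intro!: nn_integral_cong simp: ennreal_mult[symmetric] indicator_def)
  also have "\<dots> = (\<integral>\<^sup>+ t. ennreal (ex t) * (\<Prod>j\<in>{1,2,3::nat}. ennreal (Fc t)) \<partial>lborel)"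
  proof (intro nn_integral_cong)
    fix t :: real
    have "(\<integral>\<^sup>+ x. ennreal (\<Prod>j\<in>{1,2,3::nat}. ex (x j) * indicator {..<t} (x j)) \<partial>PiM {1,2,3::nat} (\<lambda>_. lborel))
       = (\<Prod>j\<in>{1,2,3::nat}. \<integral>\<^sup>+ x. ennreal (ex x * indicator {..<t} x) \<partial>lborel)"
      by (rule nn_prod[of "{1,2,3::nat}" "\<lambda>j x. ex x * indicator {..<t} x"]) auto
    then show "(\<integral>\<^sup>+ x. ennreal (ex t) * ennreal (\<Prod>j\<in>{1,2,3::nat}. ex (x j) * indicator {..<t} (x j)) \<partial>PiM {1,2,3::nat} (\<lambda>_. lborel))
       = ennreal (ex t) * (\<Prod>j\<in>{1,2,3::nat}. ennreal (Fc t))"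
      by (subst nn_integral_cmult) (auto simp only: nn_ex_lt, measurable)
  qed
  also have "\<dots> = (\<integral>\<^sup>+ t. ennreal (exp (-t) * (1 - exp (-t))^3 * indicator {0..} t) \<partial>lborel)"
    by (intro nn_integral_cong) (auto simp: ex_def Fc_def ennreal_mult[symmetric] prod_ennreal power3_eq_cube split: split_indicator)
  also have "\<dots> = ennreal (1/4 - (1 - exp (- 0))^4/4)"
    by (rule FTC_ray[where F="\<lambda>t. (1 - exp (-t))^4/4"]) (auto intro!: derivative_eq_intros simp: power3_eq_cube, real_asymp)
  finally show ?thesis by simp
qed

abbreviation Q where "Q \<equiv> PiM {..<5::nat} (\<lambda>_. lborel::real measure)"

definition R :: "nat \<Rightarrow> (nat \<Rightarrow> real) \<Rightarrow> real" where "R i \<omega> = (\<Prod>j\<in>{..<5}-{i}. ex (\<omega> j))"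

lemma R_nonneg: "0 \<le> R i \<omega>" by (simp add: R_def prod_nonneg)
lemma R_meas[measurable]: "R i \<in> borel_measurable (PiM I (\<lambda>_. lborel))" if "{..<5}-{i} \<subseteq> I"
  unfolding R_def
proof (rule borel_measurable_prod)
  fix j assume "j \<in> {..<5}-{i}"
  then have j: "j \<in> I" using that by auto
  show "(\<lambda>\<omega>. ex (\<omega> j)) \<in> borel_measurable (PiM I (\<lambda>_. lborel))"
    by measurable (use j in auto)
qed

lemma upd_meas: "(\<lambda>x. x(i:=y)) \<in> measurable (PiM I (\<lambda>_. lborel)) (PiM (insert i I) (\<lambda>_::nat. lborel::real measure))"
  apply (rule measurable_PiM_single')
  subgoal for j by (cases "j = i") auto
  subgoal by (auto simp: space_PiM PiE_iff extensional_def)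
  done

lemma KLN:
  assumes i: "i < 5" and E: "E \<in> sets Q" and k: "k \<in> borel_measurable borel" "\<And>x. 0 \<le> k x" "\<And>x. x < 0 \<Longrightarrow> k x = 0"
    and p: "\<And>s. 0 \<le> s \<Longrightarrow> (\<integral>\<^sup>+x. ennreal (indicator E (x(i:=s)) * R i x) \<partial>PiM ({..<5}-{i}) (\<lambda>_. lborel)) = ennreal (p s)"
  shows "(\<integral>\<^sup>+\<omega>. ennreal (indicator E \<omega> * (k (\<omega> i) * R i \<omega>)) \<partial>Q) = (\<integral>\<^sup>+s. ennreal (k s * p s) \<partial>lborel)"
proof -
  let ?I = "{..<5::nat}-{i}"
  have ins: "insert i ?I = {..<5}" using i by auto
  have fin: "finite ?I" "i \<notin> ?I" by auto
  have Es: "E \<in> sets (PiM (insert i ?I) (\<lambda>_. lborel::real measure))" using E ins by simp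
  have "(\<integral>\<^sup>+\<omega>. ennreal (indicator E \<omega> * (k (\<omega> i) * R i \<omega>)) \<partial>Q)
      = (\<integral>\<^sup>+\<omega>. ennreal (indicator E \<omega> * (k (\<omega> i) * R i \<omega>)) \<partial>PiM (insert i ?I) (\<lambda>_. lborel))"
    by (simp only: ins)
  also have "\<dots> = (\<integral>\<^sup>+ y. (\<integral>\<^sup>+ x. ennreal (indicator E (x(i:=y)) * (k y * R i (x(i:=y)))) \<partial>PiM ?I (\<lambda>_. lborel)) \<partial>lborel)"
  proof -
    have fmQ: "(\<lambda>\<omega>. ennreal (indicator E \<omega> * (k (\<omega> i) * R i \<omega>))) \<in> borel_measurable Q"
    proof -
      note k(1)[measurable]
      have "(\<lambda>\<omega>. k (\<omega> i)) \<in> borel_measurable Q" by measurable (use i in auto)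
      then show ?thesis using E
        by (intro measurable_compose[OF _ measurable_ennreal] borel_measurable_times borel_measurable_indicator R_meas) auto
    qed
    then have fm: "(\<lambda>\<omega>. ennreal (indicator E \<omega> * (k (\<omega> i) * R i \<omega>))) \<in> borel_measurable (PiM (insert i ?I) (\<lambda>_. lborel))"
      by (simp only: ins)
    show ?thesis by (subst ins_rev[OF fin fm]) simp
  qed
  also have "\<dots> = (\<integral>\<^sup>+ y. ennreal (k y) * (\<integral>\<^sup>+ x. ennreal (indicator E (x(i:=y)) * R i x) \<partial>PiM ?I (\<lambda>_. lborel)) \<partial>lborel)"
  proof (intro nn_integral_cong)
    fix y
    have Ri: "R i (x(i:=y)) = R i x" for x unfolding R_def by (intro prod.cong) auto
    have m: "(\<lambda>x. indicator E (x(i:=y))) \<in> borel_measurable (PiM ?I (\<lambda>_. lborel))"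
      using measurable_comp[OF upd_meas[of i y ?I] borel_measurable_indicator[OF Es]] by (simp add: comp_def)
    have "(\<integral>\<^sup>+ x. ennreal (indicator E (x(i:=y)) * (k y * R i (x(i:=y)))) \<partial>PiM ?I (\<lambda>_. lborel))
        = (\<integral>\<^sup>+ x. ennreal (k y) * ennreal (indicator E (x(i:=y)) * R i x) \<partial>PiM ?I (\<lambda>_. lborel))"
      using k by (intro nn_integral_cong) (simp add: Ri ennreal_mult'[symmetric] mult.left_commute)
    also have "\<dots> = ennreal (k y) * (\<integral>\<^sup>+ x. ennreal (indicator E (x(i:=y)) * R i x) \<partial>PiM ?I (\<lambda>_. lborel))"
      by (rule nn_integral_cmult) (intro measurable_compose[OF _ measurable_ennreal] borel_measurable_times m R_meas, simp)
    finally show "(\<integral>\<^sup>+ x. ennreal (indicator E (x(i:=y)) * (k y * R i (x(i:=y)))) \<partial>PiM ?I (\<lambda>_. lborel))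
       = ennreal (k y) * (\<integral>\<^sup>+ x. ennreal (indicator E (x(i:=y)) * R i x) \<partial>PiM ?I (\<lambda>_. lborel))" .
  qed
  also have "\<dots> = (\<integral>\<^sup>+s. ennreal (k s * p s) \<partial>lborel)"
  proof (intro nn_integral_cong)
    fix y :: real
    show "ennreal (k y) * (\<integral>\<^sup>+ x. ennreal (indicator E (x(i:=y)) * R i x) \<partial>PiM ?I (\<lambda>_. lborel)) = ennreal (k y * p y)"
    proof (cases "y < 0")
      case True then show ?thesis using k by simp
    next
      case False then show ?thesis using k p[of y] by (simp add: ennreal_mult')
    qed
  qed
  finally show ?thesis .
qed


lemma int_nn_fin: "integrable M f \<Longrightarrow> (\<And>x. 0 \<le> f x) \<Longrightarrow> (\<integral>\<^sup>+ x. ennreal (f x) \<partial>M) < \<infinity>"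
  by (subst nn_integral_eq_integral) auto

lemma KL_pos:
  assumes i: "i < 5" and E: "E \<in> sets Q" and k: "integrable lborel k" "\<And>x. 0 \<le> k x" "\<And>x. x < 0 \<Longrightarrow> k x = 0"
    and pm: "p \<in> borel_measurable borel" "\<And>s. 0 \<le> s \<Longrightarrow> 0 \<le> p s" "\<And>s. 0 \<le> s \<Longrightarrow> p s \<le> 1"
    and p: "\<And>s. 0 \<le> s \<Longrightarrow> (\<integral>\<^sup>+x. ennreal (indicator E (x(i:=s)) * R i x) \<partial>PiM ({..<5}-{i}) (\<lambda>_. lborel)) = ennreal (p s)"
  shows "integrable Q (\<lambda>\<omega>. indicator E \<omega> * (k (\<omega> i) * R i \<omega>))"
    "integrable lborel (\<lambda>s. k s * p s)"
    "(\<integral>\<omega>. indicator E \<omega> * (k (\<omega> i) * R i \<omega>) \<partial>Q) = (\<integral>s. k s * p s \<partial>lborel)"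
proof -
  have km: "k \<in> borel_measurable borel" using k(1) by auto
  note km[measurable] pm(1)[measurable]
  have kn: "(\<integral>\<^sup>+\<omega>. ennreal (indicator E \<omega> * (k (\<omega> i) * R i \<omega>)) \<partial>Q) = (\<integral>\<^sup>+s. ennreal (k s * p s) \<partial>lborel)"
    by (rule KLN[OF i E km k(2,3) p])
  have fin1: "(\<integral>\<^sup>+s. ennreal (k s * p s) \<partial>lborel) < \<infinity>"
  proof -
    have "(\<integral>\<^sup>+s. ennreal (k s * p s) \<partial>lborel) \<le> (\<integral>\<^sup>+s. ennreal (k s) \<partial>lborel)"
    proof (intro nn_integral_mono)
      fix s show "ennreal (k s * p s) \<le> ennreal (k s)"
      proof (cases "0 \<le> s")
        case True then show ?thesis using k(2) pm(2,3) by (simp add: mult_left_le)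
      next
        case False then show ?thesis using k(3) by simp
      qed
    qed
    also have "\<dots> < \<infinity>" using int_nn_fin[OF k(1,2)] .
    finally show ?thesis .
  qed
  have mQ: "(\<lambda>\<omega>. indicator E \<omega> * (k (\<omega> i) * R i \<omega>)) \<in> borel_measurable Q"
  proof -
    have "(\<lambda>\<omega>. k (\<omega> i)) \<in> borel_measurable Q" by measurable (use i in auto)
    then show ?thesis using E by (intro borel_measurable_times borel_measurable_indicator R_meas) auto
  qed
  have nnQ: "\<And>\<omega>. 0 \<le> indicator E \<omega> * (k (\<omega> i) * R i \<omega>)" using k(2) R_nonneg by simp
  have nnl: "0 \<le> k s * p s" for s
  proof (cases "0 \<le> s")
    case True then show ?thesis using k(2) pm(2) by simp
  next
    case False then show ?thesis using k(3) by simp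
  qed
  show i1: "integrable Q (\<lambda>\<omega>. indicator E \<omega> * (k (\<omega> i) * R i \<omega>))"
    by (rule integrableI_nonneg) (use mQ nnQ kn fin1 in auto)
  show i2: "integrable lborel (\<lambda>s. k s * p s)"
    by (rule integrableI_nonneg) (use nnl fin1 in auto)
  show "(\<integral>\<omega>. indicator E \<omega> * (k (\<omega> i) * R i \<omega>) \<partial>Q) = (\<integral>s. k s * p s \<partial>lborel)"
    using kn by (simp add: integral_eq_nn_integral[OF mQ] integral_eq_nn_integral nnQ nnl)
qed

lemma KL:
  assumes i: "i < 5" and E: "E \<in> sets Q" and k: "integrable lborel k" "\<And>x. x < 0 \<Longrightarrow> k x = 0"
    and pm: "p \<in> borel_measurable borel" "\<And>s. 0 \<le> s \<Longrightarrow> 0 \<le> p s" "\<And>s. 0 \<le> s \<Longrightarrow> p s \<le> 1"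
    and p: "\<And>s. 0 \<le> s \<Longrightarrow> (\<integral>\<^sup>+x. ennreal (indicator E (x(i:=s)) * R i x) \<partial>PiM ({..<5}-{i}) (\<lambda>_. lborel)) = ennreal (p s)"
  shows "integrable Q (\<lambda>\<omega>. indicator E \<omega> * (k (\<omega> i) * R i \<omega>))"
    "(\<integral>\<omega>. indicator E \<omega> * (k (\<omega> i) * R i \<omega>) \<partial>Q) = (\<integral>s. k s * p s \<partial>lborel)"
    "integrable lborel (\<lambda>s. k s * p s)"
proof -
  define kp where "kp x = max (k x) 0" for x
  define kn where "kn x = max (- k x) 0" for x
  have ip: "integrable lborel kp" unfolding kp_def using k(1) by (intro integrable_max) auto
  have ineg: "integrable lborel kn" unfolding kn_def using k(1) by (intro integrable_max) auto
  have P: "integrable Q (\<lambda>\<omega>. indicator E \<omega> * (kp (\<omega> i) * R i \<omega>))" "integrable lborel (\<lambda>s. kp s * p s)"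
    "(\<integral>\<omega>. indicator E \<omega> * (kp (\<omega> i) * R i \<omega>) \<partial>Q) = (\<integral>s. kp s * p s \<partial>lborel)"
    by (rule KL_pos[OF i E ip _ _ pm p]; (simp add: kp_def k(2))?)+
  have N: "integrable Q (\<lambda>\<omega>. indicator E \<omega> * (kn (\<omega> i) * R i \<omega>))" "integrable lborel (\<lambda>s. kn s * p s)"
    "(\<integral>\<omega>. indicator E \<omega> * (kn (\<omega> i) * R i \<omega>) \<partial>Q) = (\<integral>s. kn s * p s \<partial>lborel)"
    by (rule KL_pos[OF i E ineg _ _ pm p]; (simp add: kn_def k(2))?)+
  have kk: "k x = kp x - kn x" for x by (simp add: kp_def kn_def max_def)
  have eq1: "(\<lambda>\<omega>. indicator E \<omega> * (k (\<omega> i) * R i \<omega>)) = (\<lambda>\<omega>. indicator E \<omega> * (kp (\<omega> i) * R i \<omega>) - indicator E \<omega> * (kn (\<omega> i) * R i \<omega>))"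
    by (simp add: kk algebra_simps)
  have eq2: "(\<lambda>s. k s * p s) = (\<lambda>s. kp s * p s - kn s * p s)" by (simp add: kk algebra_simps)
  show "integrable Q (\<lambda>\<omega>. indicator E \<omega> * (k (\<omega> i) * R i \<omega>))"
    unfolding eq1 using P N by auto
  show "(\<integral>\<omega>. indicator E \<omega> * (k (\<omega> i) * R i \<omega>) \<partial>Q) = (\<integral>s. k s * p s \<partial>lborel)"
    unfolding eq1 eq2 using P N by (simp add: integral_diff)
  show "integrable lborel (\<lambda>s. k s * p s)"
    unfolding eq2 using P N by auto
qed

lemma med3_sym1: "med3 a b c = med3 b a c" by (auto simp: med3_def max_def min_def)
lemma med3_sym2: "med3 a b c = med3 a c b" by (auto simp: med3_def max_def min_def)

lemma med3_ind: "(if med3 a b c < d then 1 else 0::real) =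
   indicator {..<d} a * indicator {..<d} b + indicator {..<d} a * indicator {d..} b * indicator {..<d} c
   + indicator {d..} a * indicator {..<d} b * indicator {..<d} c"
  by (auto simp: med3_def max_def min_def indicator_def)

lemma med3_ind2: "(if med3 s a b < d then 1 else 0::real) =
   (if s < d then indicator {..<d} a + indicator {d..} a * indicator {..<d} b
    else indicator {..<d} a * indicator {..<d} b)"
  by (auto simp: med3_def max_def min_def indicator_def)

definition lt :: "real \<Rightarrow> real \<Rightarrow> real" where "lt c y = ex y * indicator {..<c} y"
definition ge :: "real \<Rightarrow> real \<Rightarrow> real" where "ge c y = ex y * indicator {c..} y"
lemma lt_nonneg[simp]: "0 \<le> lt c y" by (simp add: lt_def)
lemma ge_nonneg[simp]: "0 \<le> ge c y" by (simp add: ge_def)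
lemma lt_meas[measurable]: "lt c \<in> borel_measurable borel" unfolding lt_def by measurable
lemma ge_meas[measurable]: "ge c \<in> borel_measurable borel" unfolding ge_def by measurable
lemma nn_lt: "(\<integral>\<^sup>+x. ennreal (lt c x) \<partial>lborel) = ennreal (Fc c)" unfolding lt_def by (rule nn_ex_lt)
lemma nn_ge: "(\<integral>\<^sup>+x. ennreal (ge c x) \<partial>lborel) = ennreal (1 - Fc c)" unfolding ge_def by (rule nn_ex_ge)

lemma nn_prod3:
  fixes f g h :: "real \<Rightarrow> real"
  assumes "distinct [a,b,c::nat]" "\<And>x. 0 \<le> f x" "\<And>x. 0 \<le> g x" "\<And>x. 0 \<le> h x"
    "f \<in> borel_measurable borel" "g \<in> borel_measurable borel" "h \<in> borel_measurable borel"
  shows "(\<integral>\<^sup>+x. ennreal (f (x a) * g (x b) * h (x c)) \<partial>PiM {a,b,c} (\<lambda>_. lborel))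
    = (\<integral>\<^sup>+x. ennreal (f x) \<partial>lborel) * (\<integral>\<^sup>+x. ennreal (g x) \<partial>lborel) * (\<integral>\<^sup>+x. ennreal (h x) \<partial>lborel)"
proof -
  define F where "F j = (if j = a then f else if j = b then g else h)" for j
  have "(\<integral>\<^sup>+x. ennreal (f (x a) * g (x b) * h (x c)) \<partial>PiM {a,b,c} (\<lambda>_. lborel))
      = (\<integral>\<^sup>+x. ennreal (\<Prod>j\<in>{a,b,c}. F j (x j)) \<partial>PiM {a,b,c} (\<lambda>_. lborel))"
    using assms(1) by (intro nn_integral_cong) (auto simp: F_def mult.assoc)
  also have "\<dots> = (\<Prod>j\<in>{a,b,c}. \<integral>\<^sup>+ x. ennreal (F j x) \<partial>lborel)"
    by (rule nn_prod) (use assms in \<open>auto simp: F_def\<close>)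
  finally show ?thesis using assms(1) by (simp add: F_def mult.assoc)
qed

lemma nn_prod2:
  fixes f g :: "real \<Rightarrow> real"
  assumes "a \<noteq> (b::nat)" "\<And>x. 0 \<le> f x" "\<And>x. 0 \<le> g x"
    "f \<in> borel_measurable borel" "g \<in> borel_measurable borel"
  shows "(\<integral>\<^sup>+x. ennreal (f (x a) * g (x b)) \<partial>PiM {a,b} (\<lambda>_. lborel))
    = (\<integral>\<^sup>+x. ennreal (f x) \<partial>lborel) * (\<integral>\<^sup>+x. ennreal (g x) \<partial>lborel)"
proof -
  define F where "F j = (if j = a then f else g)" for j
  have "(\<integral>\<^sup>+x. ennreal (f (x a) * g (x b)) \<partial>PiM {a,b} (\<lambda>_. lborel))
      = (\<integral>\<^sup>+x. ennreal (\<Prod>j\<in>{a,b}. F j (x j)) \<partial>PiM {a,b} (\<lambda>_. lborel))"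
    using assms(1) by (intro nn_integral_cong) (auto simp: F_def)
  also have "\<dots> = (\<Prod>j\<in>{a,b}. \<integral>\<^sup>+ x. ennreal (F j x) \<partial>lborel)"
    by (rule nn_prod) (use assms in \<open>auto simp: F_def\<close>)
  finally show ?thesis using assms(1) by (simp add: F_def)
qed

lemma MED:
  "(\<integral>\<^sup>+x. ennreal ((if med3 (x 1) (x 2) (x 3) < c then 1 else 0) * (ex (x 1) * (ex (x 2) * ex (x 3)))) \<partial>PiM {1,2,3::nat} (\<lambda>_. lborel))
   = ennreal (3 * Fc c ^ 2 - 2 * Fc c ^ 3)"
proof -
  let ?M = "PiM {1,2,3::nat} (\<lambda>_. lborel::real measure)"
  have "(\<integral>\<^sup>+x. ennreal ((if med3 (x 1) (x 2) (x 3) < c then 1 else 0) * (ex (x 1) * (ex (x 2) * ex (x 3)))) \<partial>?M)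
    = (\<integral>\<^sup>+x. ennreal (lt c (x 1) * lt c (x 2) * ex (x 3)) + ennreal (lt c (x 1) * ge c (x 2) * lt c (x 3))
         + ennreal (ge c (x 1) * lt c (x 2) * lt c (x 3)) \<partial>?M)"
    by (intro nn_integral_cong) (simp add: med3_ind lt_def ge_def ennreal_plus[symmetric] algebra_simps del: ennreal_plus)
  also have "\<dots> = (\<integral>\<^sup>+x. ennreal (lt c (x 1) * lt c (x 2) * ex (x 3)) \<partial>?M) + (\<integral>\<^sup>+x. ennreal (lt c (x 1) * ge c (x 2) * lt c (x 3)) \<partial>?M)
         + (\<integral>\<^sup>+x. ennreal (ge c (x 1) * lt c (x 2) * lt c (x 3)) \<partial>?M)"
    by (subst nn_integral_add, measurable, subst nn_integral_add, measurable)
  also have "\<dots> = ennreal (Fc c) * ennreal (Fc c) * 1 + ennreal (Fc c) * ennreal (1 - Fc c) * ennreal (Fc c)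
        + ennreal (1 - Fc c) * ennreal (Fc c) * ennreal (Fc c)"
    by (simp add: nn_prod3 nn_lt nn_ge nn_ex)
  also have "\<dots> = ennreal (3 * Fc c ^ 2 - 2 * Fc c ^ 3)"
    by (simp add: ennreal_mult'[symmetric] ennreal_plus[symmetric] del: ennreal_plus)
       (simp add: algebra_simps power2_eq_square power3_eq_cube)
  finally show ?thesis .
qed

definition G2 :: "real \<Rightarrow> real \<Rightarrow> real" where
  "G2 s c = (if s < c then 1 - (1 - Fc c)^2 else Fc c ^ 2)"

lemma MED2:
  assumes "j \<noteq> (k::nat)"
  shows "(\<integral>\<^sup>+x. ennreal ((if med3 s (x j) (x k) < c then 1 else 0) * (ex (x j) * ex (x k))) \<partial>PiM {j,k} (\<lambda>_. lborel))
   = ennreal (G2 s c)"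
proof -
  let ?M = "PiM {j,k} (\<lambda>_. lborel::real measure)"
  show ?thesis
  proof (cases "s < c")
    case True
    have "(\<integral>\<^sup>+x. ennreal ((if med3 s (x j) (x k) < c then 1 else 0) * (ex (x j) * ex (x k))) \<partial>?M)
      = (\<integral>\<^sup>+x. ennreal (lt c (x j) * ex (x k)) + ennreal (ge c (x j) * lt c (x k)) \<partial>?M)"
      using True by (intro nn_integral_cong) (simp add: med3_ind2 lt_def ge_def ennreal_plus[symmetric] algebra_simps del: ennreal_plus)
    also have "\<dots> = (\<integral>\<^sup>+x. ennreal (lt c (x j) * ex (x k)) \<partial>?M) + (\<integral>\<^sup>+x. ennreal (ge c (x j) * lt c (x k)) \<partial>?M)"
      by (subst nn_integral_add, measurable)
    also have "\<dots> = ennreal (Fc c) * 1 + ennreal (1 - Fc c) * ennreal (Fc c)"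
      using assms by (simp add: nn_prod2 nn_lt nn_ge nn_ex)
    also have "\<dots> = ennreal (G2 s c)"
      using True by (simp add: G2_def ennreal_mult'[symmetric] ennreal_plus[symmetric] del: ennreal_plus)
         (simp add: algebra_simps power2_eq_square)
    finally show ?thesis .
  next
    case False
    have "(\<integral>\<^sup>+x. ennreal ((if med3 s (x j) (x k) < c then 1 else 0) * (ex (x j) * ex (x k))) \<partial>?M)
      = (\<integral>\<^sup>+x. ennreal (lt c (x j) * lt c (x k)) \<partial>?M)"
      using False by (intro nn_integral_cong) (simp add: med3_ind2 lt_def ge_def algebra_simps)
    also have "\<dots> = ennreal (Fc c) * ennreal (Fc c)"
      using assms by (simp add: nn_prod2 nn_lt)
    also have "\<dots> = ennreal (G2 s c)"
      using False by (simp add: G2_def ennreal_mult'[symmetric] power2_eq_square)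
    finally show ?thesis .
  qed
qed

lemma less5: "{..<5::nat} = {0,1,2,3,4}" by auto
lemma m50: "{..<5::nat}-{0} = {1,2,3,4}" by auto
lemma m51: "{..<5::nat}-{1} = {0,2,3,4}" by auto
lemma m52: "{..<5::nat}-{2} = {0,1,3,4}" by auto
lemma m53: "{..<5::nat}-{3} = {0,1,2,4}" by auto
lemma m54: "{..<5::nat}-{4} = {0,1,2,3}" by auto
lemmas m5 = m50 m51 m52 m53 m54
lemma R0: "R 0 x = ex (x 1) * ex (x 2) * ex (x 3) * ex (x 4)" by (simp add: R_def m5)
lemma R1: "R 1 x = ex (x 0) * ex (x 2) * ex (x 3) * ex (x 4)" unfolding R_def m51 by (simp add: mult.assoc)
lemma R1': "R (Suc 0) x = ex (x 0) * ex (x 2) * ex (x 3) * ex (x 4)" using R1 by simp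
lemma R2: "R 2 x = ex (x 0) * ex (x 1) * ex (x 3) * ex (x 4)" by (simp add: R_def m5)
lemma R3: "R 3 x = ex (x 0) * ex (x 1) * ex (x 2) * ex (x 4)" by (simp add: R_def m5)
lemma R4: "R 4 x = ex (x 0) * ex (x 1) * ex (x 2) * ex (x 3)" by (simp add: R_def m5)
lemmas Rs = R0 R1 R1' R2 R3 R4

lemma PA4: "0 \<le> s \<Longrightarrow> (\<integral>\<^sup>+x. ennreal (indicator evA (x(4:=s)) * R 4 x) \<partial>PiM ({..<5}-{4}) (\<lambda>_. lborel)) = ennreal ((1 - exp (-s))^3)"
proof -
  assume s: "0 \<le> s"
  have I: "{..<5::nat}-{4} = {0,1,2,3}" by auto
  define F where "F j = (if j = (0::nat) then ex else lt s)" for j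
  have "(\<integral>\<^sup>+x. ennreal (indicator evA (x(4:=s)) * R 4 x) \<partial>PiM ({..<5}-{4}) (\<lambda>_. lborel))
     = (\<integral>\<^sup>+x. ennreal (\<Prod>j\<in>{0,1,2,3}. F j (x j)) \<partial>PiM {0,1,2,3} (\<lambda>_. lborel))"
    unfolding I by (intro nn_integral_cong) (auto simp: evA_def Rs F_def lt_def indicator_def)
  also have "\<dots> = (\<Prod>j\<in>{0,1,2,3::nat}. \<integral>\<^sup>+ x. ennreal (F j x) \<partial>lborel)"
    by (rule nn_prod) (auto simp: F_def)
  also have "\<dots> = ennreal ((1 - exp (-s))^3)"
    using s by (simp add: F_def nn_ex nn_lt Fc_def prod_ennreal power3_eq_cube ennreal_mult'[symmetric])
  finally show ?thesis .
qed

lemma OneD_A1: "0 \<le> s \<Longrightarrow> (\<integral>\<^sup>+t. ennreal (ex t * indicator {s<..} t) * ennreal (Fc t * Fc t) \<partial>lborel)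
   = ennreal (exp (-s) - exp (-s)^2 + exp (-s)^3/3)"
proof -
  assume s: "0 \<le> s"
  have "(\<integral>\<^sup>+t. ennreal (ex t * indicator {s<..} t) * ennreal (Fc t * Fc t) \<partial>lborel)
      = (\<integral>\<^sup>+t. ennreal (exp (-t) * (1 - exp (-t))^2 * indicator {s..} t) \<partial>lborel)"
    by (intro nn_integral_cong_AE, rule AE_I'[where N="{s}"])
       (use s in \<open>auto simp: ex_def Fc_def ennreal_mult'[symmetric] power2_eq_square split: split_indicator\<close>)
  also have "\<dots> = ennreal (0 - (- exp (-s) + exp (-s)^2 - exp (-s)^3/3))"
  proof (rule FTC_ray[where F="\<lambda>t. - exp (-t) + exp (-t)^2 - exp (-t)^3/3"])
    fix t :: real
    show "((\<lambda>t. - exp (-t) + exp (-t)^2 - exp (-t)^3/3) has_real_derivative exp (-t) * (1 - exp (-t))^2) (at t)"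
      by (rule derivative_eq_intros refl | simp)+ (simp add: power2_eq_square power3_eq_cube algebra_simps)
  qed (auto, real_asymp)
  finally show ?thesis by (simp add: algebra_simps)
qed

lemma PA1:
  assumes perm: "(i,j,k) \<in> {(1::nat,2::nat,3::nat),(2,1,3),(3,1,2)}" and s: "0 \<le> s"
  shows "(\<integral>\<^sup>+x. ennreal (indicator evA (x(i:=s)) * R i x) \<partial>PiM ({..<5}-{i}) (\<lambda>_. lborel))
     = ennreal (exp (-s) - exp (-s)^2 + exp (-s)^3/3)"
proof -
  have I: "{..<5::nat}-{i} = insert 4 {0,j,k}" using perm by auto
  have d: "j \<noteq> 4" "k \<noteq> 4" "distinct [0,j,k]" using perm by auto
  have "(\<integral>\<^sup>+x. ennreal (indicator evA (x(i:=s)) * R i x) \<partial>PiM ({..<5}-{i}) (\<lambda>_. lborel))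
     = (\<integral>\<^sup>+x. ennreal ((if s < x 4 \<and> x j < x 4 \<and> x k < x 4 then 1 else 0) * (ex (x 4) * (ex (x 0) * ex (x j) * ex (x k)))) \<partial>PiM (insert 4 {0,j,k}) (\<lambda>_. lborel))"
    unfolding I[symmetric] using perm
    by (intro nn_integral_cong) (auto simp: evA_def Rs indicator_def)
  also have "\<dots> = (\<integral>\<^sup>+t. \<integral>\<^sup>+x. ennreal (ex t * indicator {s<..} t) * ennreal (ex (x 0) * lt t (x j) * lt t (x k)) \<partial>PiM {0,j,k} (\<lambda>_. lborel) \<partial>lborel)"
    by (subst ins_rev) (use d in \<open>auto intro!: nn_integral_cong simp: lt_def ennreal_mult'[symmetric] indicator_def\<close>)
  also have "\<dots> = (\<integral>\<^sup>+t. ennreal (ex t * indicator {s<..} t) * ennreal (Fc t * Fc t) \<partial>lborel)"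
    by (intro nn_integral_cong, subst nn_integral_cmult) (use d in \<open>auto simp: nn_prod3 nn_ex nn_lt ennreal_mult'[symmetric]\<close>)
  also have "\<dots> = ennreal (exp (-s) - exp (-s)^2 + exp (-s)^3/3)" by (rule OneD_A1[OF s])
  finally show ?thesis .
qed

lemma OneD_B0: assumes s: "0 \<le> s"
  shows "(\<integral>\<^sup>+t. ennreal (ex t) * ennreal (3 * Fc (t - s) ^ 2 - 2 * Fc (t - s) ^ 3) \<partial>lborel) = ennreal (exp (-s) / 2)"
proof -
  define b where "b = exp s"
  have "(\<integral>\<^sup>+t. ennreal (ex t) * ennreal (3 * Fc (t - s) ^ 2 - 2 * Fc (t - s) ^ 3) \<partial>lborel)
      = (\<integral>\<^sup>+t. ennreal (exp (-t) * ((1 - b * exp (-t))^2 * (1 + 2 * b * exp (-t))) * indicator {s..} t) \<partial>lborel)"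
  proof (intro nn_integral_cong)
    fix t :: real
    show "ennreal (ex t) * ennreal (3 * Fc (t - s) ^ 2 - 2 * Fc (t - s) ^ 3) =
          ennreal (exp (-t) * ((1 - b * exp (-t))^2 * (1 + 2 * b * exp (-t))) * indicator {s..} t)"
    proof (cases "s \<le> t")
      case True
      have e: "exp (s - t) = exp s * exp (-t)" by (simp add: exp_diff exp_minus field_simps)
      have "Fc (t - s) = 1 - b * exp (-t)" using True by (simp add: Fc_def e b_def)
      then show ?thesis using True s
        by (simp add: ex_def ennreal_mult'[symmetric]) (simp add: algebra_simps power2_eq_square power3_eq_cube)
    next
      case False then show ?thesis by (simp add: Fc_def)
    qed
  qed
  also have "\<dots> = ennreal (0 - (- exp (-s) + b^2 * exp (-s)^3 - b^3 * exp (-s)^4 / 2))"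
  proof (rule FTC_ray[where F="\<lambda>t. - exp (-t) + b^2 * exp (-t)^3 - b^3 * exp (-t)^4 / 2"])
    fix t :: real
    show "((\<lambda>t. - exp (-t) + b^2 * exp (-t)^3 - b^3 * exp (-t)^4 / 2) has_real_derivative
        exp (-t) * ((1 - b * exp (-t))^2 * (1 + 2 * b * exp (-t)))) (at t)"
      by (rule derivative_eq_intros refl | simp)+ (simp add: power2_eq_square power3_eq_cube algebra_simps eval_nat_numeral)
  next
    fix t :: real
    show "0 \<le> exp (-t) * ((1 - b * exp (-t))^2 * (1 + 2 * b * exp (-t)))"
      unfolding b_def by (intro mult_nonneg_nonneg) (auto intro: add_nonneg_nonneg)
  qed (unfold b_def, measurable, real_asymp)
  also have "\<dots> = ennreal (exp (-s) / 2)"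
  proof -
    have ba: "b * exp (-s) = 1" unfolding b_def by (simp add: exp_minus)
    have "b^2 * exp (-s)^3 = (b * exp (-s))^2 * exp (-s)" by (simp add: power2_eq_square power3_eq_cube)
    moreover have "b^3 * exp (-s)^4 = (b * exp (-s))^3 * exp (-s)" by (simp add: power3_eq_cube eval_nat_numeral)
    ultimately show ?thesis by (simp add: ba)
  qed
  finally show ?thesis .
qed

lemma OneD_B4: assumes s: "0 \<le> s"
  shows "(\<integral>\<^sup>+u. ennreal (ex u) * ennreal (3 * Fc (s - u) ^ 2 - 2 * Fc (s - u) ^ 3) \<partial>lborel) = ennreal ((1 - exp (-s))^3)"
proof -
  define c where "c = exp (-s)"
  have "(\<integral>\<^sup>+u. ennreal (ex u) * ennreal (3 * Fc (s - u) ^ 2 - 2 * Fc (s - u) ^ 3) \<partial>lborel)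
      = (\<integral>\<^sup>+u. ennreal (exp (-u) * ((1 - c * exp u)^2 * (1 + 2 * c * exp u)) * indicator {0..s} u) \<partial>lborel)"
  proof -
    have pt: "ennreal (ex u) * ennreal (3 * Fc (s - u) ^ 2 - 2 * Fc (s - u) ^ 3) =
          ennreal (exp (-u) * ((1 - c * exp u)^2 * (1 + 2 * c * exp u)) * indicator {0..s} u)" if ne: "u \<noteq> s" for u
    proof (cases "0 \<le> u \<and> u \<le> s")
      case True
      have e: "exp (u - s) = exp (-s) * exp u" by (simp add: exp_diff exp_minus field_simps)
      have "Fc (s - u) = 1 - c * exp u" using True by (simp add: Fc_def e c_def)
      then show ?thesis using True
        by (simp add: ex_def ennreal_mult'[symmetric]) (simp add: algebra_simps power2_eq_square power3_eq_cube)
    next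
      case False then show ?thesis using ne by (auto simp: Fc_def ex_def)
    qed
    show ?thesis by (intro nn_integral_cong_AE eventually_mono[OF AE_lborel_singleton[of s]]) (rule pt)
  qed
  also have "\<dots> = ennreal ((- exp (-s) - 3 * c^2 * exp s + c^3 * exp s ^ 2) - (- exp (-0) - 3 * c^2 * exp 0 + c^3 * exp 0 ^ 2))"
  proof (rule FTC_seg[where F="\<lambda>u. - exp (-u) - 3 * c^2 * exp u + c^3 * exp u ^ 2"])
    fix u :: real
    have eu: "exp (-u) * exp u = 1" by (simp add: exp_minus)
    have "exp (-u) * ((1 - c * exp u)^2 * (1 + 2 * c * exp u)) = exp (-u) - 3 * c^2 * (exp (-u) * exp u) * exp u + 2 * c^3 * (exp (-u) * exp u) * exp u ^ 2"
      by (simp add: power2_eq_square power3_eq_cube algebra_simps)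
    also have "\<dots> = exp (-u) - 3 * c^2 * exp u + 2 * c^3 * exp u ^ 2" by (simp add: eu)
    finally have fe: "exp (-u) * ((1 - c * exp u)^2 * (1 + 2 * c * exp u)) = exp (-u) - 3 * c^2 * exp u + 2 * c^3 * exp u ^ 2" .
    show "((\<lambda>u. - exp (-u) - 3 * c^2 * exp u + c^3 * exp u ^ 2) has_real_derivative
        exp (-u) * ((1 - c * exp u)^2 * (1 + 2 * c * exp u))) (at u)"
      unfolding fe by (rule derivative_eq_intros refl | simp)+ (simp add: power2_eq_square algebra_simps)
  next
    fix u :: real
    show "0 \<le> exp (-u) * ((1 - c * exp u)^2 * (1 + 2 * c * exp u))"
      unfolding c_def by (intro mult_nonneg_nonneg) (auto intro: add_nonneg_nonneg)
  qed (use s in \<open>unfold c_def, measurable\<close>)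
  also have "\<dots> = ennreal ((1 - exp (-s))^3)"
  proof -
    have cs: "c * exp s = 1" unfolding c_def by (simp add: exp_minus)
    have h1: "c^2 * exp s = c" using cs by (simp add: power2_eq_square mult.assoc)
    have h2: "c^3 * exp s ^ 2 = c"
    proof -
      have "c^3 * exp s ^ 2 = c * (c * exp s) * (c * exp s)" by (simp add: power2_eq_square power3_eq_cube algebra_simps)
      then show ?thesis using cs by simp
    qed
    have "(- exp (-s) - 3 * c^2 * exp s + c^3 * exp s ^ 2) - (- exp (-0) - 3 * c^2 * exp 0 + c^3 * exp 0 ^ 2)
        = (- c - 3 * (c^2 * exp s) + (c^3 * exp s ^ 2)) - (- 1 - 3 * c^2 + c^3)" by (simp add: c_def)
    also have "\<dots> = (1 - c)^3" unfolding h1 h2 by (simp add: algebra_simps power2_eq_square power3_eq_cube)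
    finally show ?thesis by (simp add: c_def)
  qed
  finally show ?thesis .
qed


lemma med3_meas[measurable]:
  "f \<in> borel_measurable M \<Longrightarrow> g \<in> borel_measurable M \<Longrightarrow> h \<in> borel_measurable M \<Longrightarrow> (\<lambda>x. med3 (f x) (g x) (h x)) \<in> borel_measurable M"
  unfolding med3_def by (intro borel_measurable_max borel_measurable_min) auto

lemmas MED' = MED[unfolded One_nat_def]

lemma set5_4: "{..<5::nat} - {4} = insert 0 {1,2,3}" by auto

lemma PB0: assumes s: "0 \<le> s"
  shows "(\<integral>\<^sup>+x. ennreal (indicator evB (x(0:=s)) * R 0 x) \<partial>PiM ({..<5}-{0}) (\<lambda>_. lborel)) = ennreal (exp (-s)/2)"
proof -
  have "(\<integral>\<^sup>+x. ennreal (indicator evB (x(0:=s)) * R 0 x) \<partial>PiM ({..<5}-{0}) (\<lambda>_. lborel))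
     = (\<integral>\<^sup>+x. ennreal ((if med3 (x 1) (x 2) (x 3) < x 4 - s then 1 else 0) * (ex (x 4) * (ex (x 1) * (ex (x 2) * ex (x 3))))) \<partial>PiM (insert 4 {1,2,3::nat}) (\<lambda>_. lborel))"
    unfolding set5_0 by (intro nn_integral_cong) (auto simp: evB_def Rs indicator_def algebra_simps)
  also have "\<dots> = (\<integral>\<^sup>+ t. (\<integral>\<^sup>+ x. ennreal (ex t) * ennreal ((if med3 (x 1) (x 2) (x 3) < t - s then 1 else 0) * (ex (x 1) * (ex (x 2) * ex (x 3)))) \<partial>PiM {1,2,3::nat} (\<lambda>_. lborel)) \<partial>lborel)"
    by (subst ins_rev) (auto intro!: nn_integral_cong simp: ennreal_mult'[symmetric])
  also have "\<dots> = (\<integral>\<^sup>+t. ennreal (ex t) * ennreal (3 * Fc (t - s) ^ 2 - 2 * Fc (t - s) ^ 3) \<partial>lborel)"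
    by (intro nn_integral_cong, subst nn_integral_cmult) (auto simp: MED MED')
  also have "\<dots> = ennreal (exp (-s)/2)" by (rule OneD_B0[OF s])
  finally show ?thesis .
qed

lemma PB4: assumes s: "0 \<le> s"
  shows "(\<integral>\<^sup>+x. ennreal (indicator evB (x(4:=s)) * R 4 x) \<partial>PiM ({..<5}-{4}) (\<lambda>_. lborel)) = ennreal ((1 - exp (-s))^3)"
proof -
  have "(\<integral>\<^sup>+x. ennreal (indicator evB (x(4:=s)) * R 4 x) \<partial>PiM ({..<5}-{4}) (\<lambda>_. lborel))
     = (\<integral>\<^sup>+x. ennreal ((if med3 (x 1) (x 2) (x 3) < s - x 0 then 1 else 0) * (ex (x 0) * (ex (x 1) * (ex (x 2) * ex (x 3))))) \<partial>PiM (insert 0 {1,2,3::nat}) (\<lambda>_. lborel))"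
    unfolding set5_4 by (intro nn_integral_cong) (auto simp: evB_def Rs indicator_def algebra_simps)
  also have "\<dots> = (\<integral>\<^sup>+ u. (\<integral>\<^sup>+ x. ennreal (ex u) * ennreal ((if med3 (x 1) (x 2) (x 3) < s - u then 1 else 0) * (ex (x 1) * (ex (x 2) * ex (x 3)))) \<partial>PiM {1,2,3::nat} (\<lambda>_. lborel)) \<partial>lborel)"
    by (subst ins_rev) (auto intro!: nn_integral_cong simp: ennreal_mult'[symmetric])
  also have "\<dots> = (\<integral>\<^sup>+u. ennreal (ex u) * ennreal (3 * Fc (s - u) ^ 2 - 2 * Fc (s - u) ^ 3) \<partial>lborel)"
    by (intro nn_integral_cong, subst nn_integral_cmult) (auto simp: MED MED')
  also have "\<dots> = ennreal ((1 - exp (-s))^3)" by (rule OneD_B4[OF s])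
  finally show ?thesis .
qed

lemma OneD_B1in: assumes u: "0 \<le> u" and s: "0 \<le> s"
  shows "(\<integral>\<^sup>+t. ennreal (ex t) * ennreal (G2 s (t - u)) \<partial>lborel) = ennreal (exp (-u) * (1/3 + exp (-s)^2 - 2 * exp (-s)^3 / 3))"
proof -
  define f1 where "f1 t = exp (-t) * (1 - exp (u - t))^2" for t
  define f2 where "f2 t = exp (-t) * (1 - exp (u - t)^2)" for t
  define F1 where "F1 t = - exp (-t) + exp (-t) * exp (u - t) - exp (-t) * exp (u - t)^2 / 3" for t
  define F2 where "F2 t = - exp (-t) + exp (-t) * exp (u - t)^2 / 3" for t
  have pt: "ennreal (ex t) * ennreal (G2 s (t - u)) = ennreal (f1 t * indicator {u..u+s} t) + ennreal (f2 t * indicator {u+s..} t)"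
    if ne: "t \<noteq> u + s" for t
  proof -
    consider "t < u" | "u \<le> t" "t < u + s" | "u + s < t" using ne by linarith
    then show ?thesis
    proof cases
      case 1 then show ?thesis using s by (simp add: G2_def Fc_def)
    next
      case 2 then show ?thesis using u s
        by (simp add: G2_def Fc_def ex_def f1_def ennreal_mult'[symmetric] power2_eq_square)
    next
      case 3 then show ?thesis using u s
        by (simp add: G2_def Fc_def ex_def f2_def ennreal_mult'[symmetric] power2_eq_square algebra_simps)
    qed
  qed
  have "(\<integral>\<^sup>+t. ennreal (ex t) * ennreal (G2 s (t - u)) \<partial>lborel)
      = (\<integral>\<^sup>+t. ennreal (f1 t * indicator {u..u+s} t) + ennreal (f2 t * indicator {u+s..} t) \<partial>lborel)"
    by (intro nn_integral_cong_AE eventually_mono[OF AE_lborel_singleton[of "u+s"]]) (rule pt)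
  also have "\<dots> = (\<integral>\<^sup>+t. ennreal (f1 t * indicator {u..u+s} t) \<partial>lborel) + (\<integral>\<^sup>+t. ennreal (f2 t * indicator {u+s..} t) \<partial>lborel)"
    by (rule nn_integral_add) (auto simp: f1_def f2_def)
  also have "(\<integral>\<^sup>+t. ennreal (f1 t * indicator {u..u+s} t) \<partial>lborel) = ennreal (F1 (u+s) - F1 u)"
  proof (rule FTC_seg)
    fix t :: real
    show "(F1 has_real_derivative f1 t) (at t)"
      unfolding F1_def f1_def
      by (rule derivative_eq_intros refl | simp)+ (simp add: power2_eq_square algebra_simps)
  qed (use s in \<open>auto simp: f1_def\<close>)
  also have "(\<integral>\<^sup>+t. ennreal (f2 t * indicator {u+s..} t) \<partial>lborel) = ennreal (0 - F2 (u+s))"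
  proof (rule FTC_ray)
    fix t :: real
    show "(F2 has_real_derivative f2 t) (at t)"
      unfolding F2_def f2_def
      by (rule derivative_eq_intros refl | simp)+ (simp add: power2_eq_square algebra_simps)
  next
    fix t :: real assume "u + s \<le> t"
    then have "exp (u - t) \<le> 1" using s by simp
    then have "exp (u - t)^2 \<le> 1" by (simp add: power_le_one)
    then show "0 \<le> f2 t" by (simp add: f2_def)
  next
    show "(F2 \<longlongrightarrow> 0) at_top" unfolding F2_def by real_asymp
  qed (simp add: f2_def)
  also have "ennreal (F1 (u+s) - F1 u) + ennreal (0 - F2 (u+s)) = ennreal (exp (-u) * (1/3 + exp (-s)^2 - 2 * exp (-s)^3 / 3))"
  proof -
    define a where "a = exp (-u)"
    define b where "b = exp (-s)"
    have e1: "exp (- (u + s)) = a * b" unfolding a_def b_def by (simp add: exp_add[symmetric])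
    have e2: "exp (u - (u + s)) = b" unfolding b_def by simp
    have X: "F1 (u+s) - F1 u = a * (1 - b)^3 / 3"
      unfolding F1_def e1 e2 by (simp add: a_def power2_eq_square power3_eq_cube algebra_simps)
    have Y: "0 - F2 (u+s) = a * b * (1 - b^2/3)"
      unfolding F2_def e1 e2 by (simp add: power2_eq_square algebra_simps)
    have b1: "b \<le> 1" "0 < b" "0 < a" using s unfolding a_def b_def by auto
    have "0 \<le> a * (1 - b)^3 / 3" using b1 by simp
    moreover have "0 \<le> a * b * (1 - b^2/3)"
    proof -
      have "b^2 \<le> 1" using b1 by (simp add: power_le_one)
      then show ?thesis using b1 by (intro mult_nonneg_nonneg) auto
    qed
    ultimately have "ennreal (F1 (u+s) - F1 u) + ennreal (0 - F2 (u+s)) = ennreal (a * (1 - b)^3 / 3 + a * b * (1 - b^2/3))"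
      unfolding X Y by (simp add: ennreal_plus)
    also have "\<dots> = ennreal (exp (-u) * (1/3 + exp (-s)^2 - 2 * exp (-s)^3 / 3))"
      unfolding a_def[symmetric] b_def[symmetric] by (rule arg_cong[where f=ennreal]) (simp add: power2_eq_square power3_eq_cube field_simps)
    finally show ?thesis .
  qed
  finally show ?thesis .
qed


lemma OneD_B1out: assumes s: "0 \<le> s"
  shows "(\<integral>\<^sup>+u. ennreal (ex u) * (\<integral>\<^sup>+t. ennreal (ex t) * ennreal (G2 s (t - u)) \<partial>lborel) \<partial>lborel)
     = ennreal (1/6 + exp (-s)^2/2 - exp (-s)^3/3)"
proof -
  define Kc where "Kc = 1/3 + exp (-s)^2 - 2 * exp (-s)^3 / 3"
  define FF where "FF u = - (exp (-u) * exp (-u) * Kc) / 2" for u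
  have Kc0: "0 \<le> Kc"
  proof -
    have b: "exp (-s) \<le> 1" "0 \<le> exp (-s)" using s by auto
    have "exp (-s)^3 \<le> exp (-s)^2" using b by (simp add: power_decreasing)
    moreover have "0 \<le> exp (-s)^3" by simp
    ultimately show ?thesis unfolding Kc_def by linarith
  qed
  have "(\<integral>\<^sup>+u. ennreal (ex u) * (\<integral>\<^sup>+t. ennreal (ex t) * ennreal (G2 s (t - u)) \<partial>lborel) \<partial>lborel)
     = (\<integral>\<^sup>+u. ennreal (exp (-u) * exp (-u) * Kc * indicator {0..} u) \<partial>lborel)"
  proof (intro nn_integral_cong)
    fix u :: real
    show "ennreal (ex u) * (\<integral>\<^sup>+t. ennreal (ex t) * ennreal (G2 s (t - u)) \<partial>lborel) = ennreal (exp (-u) * exp (-u) * Kc * indicator {0..} u)"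
    proof (cases "0 \<le> u")
      case True
      then show ?thesis using Kc0 by (subst OneD_B1in[OF True s]) (simp add: Kc_def[symmetric] ex_def ennreal_mult'[symmetric] mult.assoc)
    qed (simp add: ex_def)
  qed
  also have "\<dots> = ennreal (0 - FF 0)"
  proof (rule FTC_ray[where F=FF])
    fix u :: real
    show "(FF has_real_derivative exp (-u) * exp (-u) * Kc) (at u)"
      unfolding FF_def by (rule derivative_eq_intros refl | simp)+
  next
    show "(\<lambda>x. exp (- x) * exp (- x) * Kc) \<in> borel_measurable borel" by measurable
  next
    fix u :: real show "0 \<le> exp (- u) * exp (- u) * Kc" using Kc0 by simp
  next
    show "(FF \<longlongrightarrow> 0) at_top" unfolding FF_def by real_asymp
  qed
  also have "\<dots> = ennreal (1/6 + exp (-s)^2/2 - exp (-s)^3/3)" by (rule arg_cong[where f=ennreal]) (simp add: Kc_def FF_def field_simps)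
  finally show ?thesis .
qed

lemma evB_upd: assumes perm: "(i,j,k) \<in> {(1::nat,2::nat,3::nat),(2,1,3),(3,1,2)}"
  shows "indicator evB (x(i:=s)) = (if x 0 + med3 s (x j) (x k) < x 4 then 1 else (0::real))"
proof -
  have "med3 (x 1) s (x 3) = med3 s (x 1) (x 3)" by (rule med3_sym1)
  moreover have "med3 (x 1) (x 2) s = med3 s (x 1) (x 2)" by (metis med3_sym1 med3_sym2)
  ultimately show ?thesis using perm by (auto simp: evB_def indicator_def)
qed

lemma R_perm: assumes perm: "(i,j,k) \<in> {(1::nat,2::nat,3::nat),(2,1,3),(3,1,2)}"
  shows "R i x = ex (x 0) * (ex (x 4) * (ex (x j) * ex (x k)))"
  using perm by (auto simp: Rs algebra_simps)

lemma PB1: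
  assumes perm: "(i,j,k) \<in> {(1::nat,2::nat,3::nat),(2,1,3),(3,1,2)}" and s: "0 \<le> s"
  shows "(\<integral>\<^sup>+x. ennreal (indicator evB (x(i:=s)) * R i x) \<partial>PiM ({..<5}-{i}) (\<lambda>_. lborel))
     = ennreal (1/6 + exp (-s)^2/2 - exp (-s)^3/3)"
proof -
  have I: "{..<5::nat}-{i} = insert 0 (insert 4 {j,k})" using perm by auto
  have d: "j \<noteq> 4" "k \<noteq> 4" "j \<noteq> 0" "k \<noteq> 0" "j \<noteq> k" using perm by auto
  have "(\<integral>\<^sup>+x. ennreal (indicator evB (x(i:=s)) * R i x) \<partial>PiM ({..<5}-{i}) (\<lambda>_. lborel))
     = (\<integral>\<^sup>+x. ennreal ((if x 0 + med3 s (x j) (x k) < x 4 then 1 else 0) * (ex (x 0) * (ex (x 4) * (ex (x j) * ex (x k))))) \<partial>PiM (insert 0 (insert 4 {j,k})) (\<lambda>_. lborel))"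
    unfolding I[symmetric] by (intro nn_integral_cong) (simp add: evB_upd[OF perm] R_perm[OF perm])
  also have "\<dots> = (\<integral>\<^sup>+u. \<integral>\<^sup>+x. ennreal (ex u) * ennreal ((if u + med3 s (x j) (x k) < x 4 then 1 else 0) * (ex (x 4) * (ex (x j) * ex (x k)))) \<partial>PiM (insert 4 {j,k}) (\<lambda>_. lborel) \<partial>lborel)"
    by (subst ins_rev) (use d in \<open>auto intro!: nn_integral_cong simp: ennreal_mult'[symmetric]\<close>)
  also have "\<dots> = (\<integral>\<^sup>+u. ennreal (ex u) * (\<integral>\<^sup>+t. ennreal (ex t) * ennreal (G2 s (t - u)) \<partial>lborel) \<partial>lborel)"
  proof (intro nn_integral_cong)
    fix u :: real
    have "(\<integral>\<^sup>+x. ennreal ((if u + med3 s (x j) (x k) < x 4 then 1 else 0) * (ex (x 4) * (ex (x j) * ex (x k)))) \<partial>PiM (insert 4 {j,k}) (\<lambda>_. lborel))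
       = (\<integral>\<^sup>+t. \<integral>\<^sup>+x. ennreal (ex t) * ennreal ((if med3 s (x j) (x k) < t - u then 1 else 0) * (ex (x j) * ex (x k))) \<partial>PiM {j,k} (\<lambda>_. lborel) \<partial>lborel)"
      by (subst ins_rev) (use d in \<open>auto intro!: nn_integral_cong simp: ennreal_mult'[symmetric] algebra_simps\<close>)
    also have "\<dots> = (\<integral>\<^sup>+t. ennreal (ex t) * ennreal (G2 s (t - u)) \<partial>lborel)"
      by (intro nn_integral_cong, subst nn_integral_cmult) (use d in \<open>auto simp: MED2\<close>)
    finally show "(\<integral>\<^sup>+x. ennreal (ex u) * ennreal ((if u + med3 s (x j) (x k) < x 4 then 1 else 0) * (ex (x 4) * (ex (x j) * ex (x k)))) \<partial>PiM (insert 4 {j,k}) (\<lambda>_. lborel))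
       = ennreal (ex u) * (\<integral>\<^sup>+t. ennreal (ex t) * ennreal (G2 s (t - u)) \<partial>lborel)"
      by (subst nn_integral_cmult) auto
  qed
  also have "\<dots> = ennreal (1/6 + exp (-s)^2/2 - exp (-s)^3/3)" by (rule OneD_B1out[OF s])
  finally show ?thesis .
qed

lemma PiM_dens:
  fixes f :: "real \<Rightarrow> ennreal"
  assumes fm: "f \<in> borel_measurable borel" and f1: "(\<integral>\<^sup>+x. f x \<partial>lborel) = 1" and I: "finite I"
  shows "PiM I (\<lambda>_. density lborel f) = density (PiM I (\<lambda>_::nat. lborel)) (\<lambda>\<omega>. \<Prod>j\<in>I. f (\<omega> j))"
proof -
  have fin: "finite_measure (density lborel f)"
    by (rule finite_measureI) (simp add: emeasure_density fm f1)
  have psf2: "product_sigma_finite (\<lambda>_::nat. density lborel f)"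
    unfolding product_sigma_finite_def using fin finite_measure.axioms(1) by blast
  show ?thesis
  proof (rule product_sigma_finite.PiM_eqI[OF psf2 I, symmetric])
    show "sets (density (PiM I (\<lambda>_. lborel)) (\<lambda>\<omega>. \<Prod>j\<in>I. f (\<omega> j))) = sets (PiM I (\<lambda>_. density lborel f))"
      by (simp only: sets_density) (rule sets_PiM_cong, auto)
  next
    fix A assume A: "\<And>i. i \<in> I \<Longrightarrow> A i \<in> sets (density lborel f)"
    then have A': "\<And>i. i \<in> I \<Longrightarrow> A i \<in> sets borel" by simp
    have PA: "PiE I A \<in> sets (PiM I (\<lambda>_::nat. lborel::real measure))"
      using A' by (intro sets_PiM_I_finite I) auto
    have "emeasure (density (PiM I (\<lambda>_. lborel)) (\<lambda>\<omega>. \<Prod>j\<in>I. f (\<omega> j))) (PiE I A)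
        = (\<integral>\<^sup>+\<omega>. (\<Prod>j\<in>I. f (\<omega> j)) * indicator (PiE I A) \<omega> \<partial>PiM I (\<lambda>_. lborel))"
      by (rule emeasure_density) (use PA fm I in \<open>simp_all\<close>)
    also have "\<dots> = (\<integral>\<^sup>+\<omega>. (\<Prod>j\<in>I. f (\<omega> j) * indicator (A j) (\<omega> j)) \<partial>PiM I (\<lambda>_. lborel))"
    proof (intro nn_integral_cong)
      fix \<omega> assume w: "\<omega> \<in> space (PiM I (\<lambda>_::nat. lborel::real measure))"
      have "indicator (PiE I A) \<omega> = (\<Prod>j\<in>I. indicator (A j) (\<omega> j) :: ennreal)"
      proof (cases "\<forall>j\<in>I. \<omega> j \<in> A j")
        case True
        then have "\<omega> \<in> PiE I A" using w by (auto simp: space_PiM PiE_iff)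
        then show ?thesis using True by simp
      next
        case False
        then obtain j where j: "j \<in> I" "\<omega> j \<notin> A j" by auto
        then have "\<omega> \<notin> PiE I A" by (auto simp: PiE_iff)
        moreover have "(\<Prod>j\<in>I. indicator (A j) (\<omega> j) :: ennreal) = 0"
          using j I by (intro prod_zero) (auto intro!: bexI[of _ j])
        ultimately show ?thesis by simp
      qed
      then show "(\<Prod>j\<in>I. f (\<omega> j)) * indicator (PiE I A) \<omega> = (\<Prod>j\<in>I. f (\<omega> j) * indicator (A j) (\<omega> j))"
        by (simp add: prod.distrib)
    qed
    also have "\<dots> = (\<Prod>j\<in>I. \<integral>\<^sup>+x. f x * indicator (A j) x \<partial>lborel)"
      by (rule product_sigma_finite.product_nn_integral_prod[OF psf I]) (use A' fm in simp)
    also have "\<dots> = (\<Prod>j\<in>I. emeasure (density lborel f) (A j))"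
      using A' fm by (intro prod.cong refl) (simp add: emeasure_density)
    finally show "emeasure (density (PiM I (\<lambda>_. lborel)) (\<lambda>\<omega>. \<Prod>j\<in>I. f (\<omega> j))) (PiE I A) = (\<Prod>j\<in>I. emeasure (density lborel f) (A j))" .
  qed
qed

definition EA :: "(nat \<Rightarrow> real) set" where "EA = {\<omega> \<in> space Q. max (\<omega> 1) (max (\<omega> 2) (\<omega> 3)) < \<omega> 4}"
definition EB :: "(nat \<Rightarrow> real) set" where "EB = {\<omega> \<in> space Q. \<omega> 0 + med3 (\<omega> 1) (\<omega> 2) (\<omega> 3) < \<omega> 4}"

lemma EA_sets: "EA \<in> sets Q" unfolding EA_def by measurable
lemma EB_sets: "EB \<in> sets Q" unfolding EB_def by measurable
lemma EA_eq: "\<omega> \<in> space Q \<Longrightarrow> indicator EA \<omega> = (indicator evA \<omega> :: real)"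
  by (auto simp: EA_def evA_def indicator_def)
lemma EB_eq: "\<omega> \<in> space Q \<Longrightarrow> indicator EB \<omega> = (indicator evB \<omega> :: real)"
  by (auto simp: EB_def evB_def indicator_def)
lemma upd_space: "i < 5 \<Longrightarrow> x \<in> space (PiM ({..<5}-{i}) (\<lambda>_::nat. lborel::real measure)) \<Longrightarrow> x(i:=s) \<in> space Q"
  by (auto simp: space_PiM PiE_iff extensional_def)

lemma phiEA: "i < 5 \<Longrightarrow> (\<integral>\<^sup>+x. ennreal (indicator EA (x(i:=s)) * R i x) \<partial>PiM ({..<5}-{i}) (\<lambda>_. lborel))
   = (\<integral>\<^sup>+x. ennreal (indicator evA (x(i:=s)) * R i x) \<partial>PiM ({..<5}-{i}) (\<lambda>_. lborel))"
  by (intro nn_integral_cong) (simp add: EA_eq upd_space)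
lemma phiEB: "i < 5 \<Longrightarrow> (\<integral>\<^sup>+x. ennreal (indicator EB (x(i:=s)) * R i x) \<partial>PiM ({..<5}-{i}) (\<lambda>_. lborel))
   = (\<integral>\<^sup>+x. ennreal (indicator evB (x(i:=s)) * R i x) \<partial>PiM ({..<5}-{i}) (\<lambda>_. lborel))"
  by (intro nn_integral_cong) (simp add: EB_eq upd_space)

definition "pA0 (s::real) = (1/4::real)"
definition "pA1 (s::real) = exp (-s) - exp (-s)^2 + exp (-s)^3/3"
definition "pA4 (s::real) = (1 - exp (-s))^3"
definition "pB0 (s::real) = exp (-s)/2"
definition "pB1 (s::real) = 1/6 + exp (-s)^2/2 - exp (-s)^3/3"
definition "pB4 (s::real) = (1 - exp (-s))^3"

lemma bb: fixes s :: real assumes "0 \<le> s" shows "0 < exp (-s)" "exp (-s) \<le> 1" "exp (-s)^2 \<le> exp (-s)" "exp (-s)^3 \<le> exp (-s)^2" "0 \<le> exp (-s)^3"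
proof -
  show b1: "exp (-s) \<le> 1" using assms exp_le_cancel_iff[of "-s" "0::real"] by simp
  show "0 < exp (-s)" by simp
  show "exp (-s)^2 \<le> exp (-s)" using b1 by (simp add: power2_eq_square mult_left_le)
  show "exp (-s)^3 \<le> exp (-s)^2" using b1 by (simp add: power_decreasing)
  show "0 \<le> exp (-s)^3" by simp
qed

lemma pbounds:
  fixes s :: real
  assumes s: "0 \<le> s"
  shows "0 \<le> pA0 s" "pA0 s \<le> 1" "0 \<le> pA1 s" "pA1 s \<le> 1" "0 \<le> pA4 s" "pA4 s \<le> 1"
        "0 \<le> pB0 s" "pB0 s \<le> 1" "0 \<le> pB1 s" "pB1 s \<le> 1" "0 \<le> pB4 s" "pB4 s \<le> 1"
proof -
  note b = bb[OF s]
  have c: "0 \<le> 1 - exp (-s)" "1 - exp (-s) \<le> 1" using b by auto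
  show "0 \<le> pA0 s" "pA0 s \<le> 1" by (simp_all add: pA0_def)
  show "0 \<le> pA1 s" "pA1 s \<le> 1" using b unfolding pA1_def by linarith+
  show "0 \<le> pA4 s" "pA4 s \<le> 1" using c unfolding pA4_def by (simp_all add: power_le_one)
  show "0 \<le> pB0 s" "pB0 s \<le> 1" using b unfolding pB0_def by linarith+
  show "0 \<le> pB1 s" "pB1 s \<le> 1" using b unfolding pB1_def by linarith+
  show "0 \<le> pB4 s" "pB4 s \<le> 1" using c unfolding pB4_def by (simp_all add: power_le_one)
qed

lemma pmeas[measurable]: "pA0 \<in> borel_measurable borel" "pA1 \<in> borel_measurable borel" "pA4 \<in> borel_measurable borel"
  "pB0 \<in> borel_measurable borel" "pB1 \<in> borel_measurable borel" "pB4 \<in> borel_measurable borel"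
  unfolding pA0_def[abs_def] pA1_def[abs_def] pA4_def[abs_def] pB0_def[abs_def] pB1_def[abs_def] pB4_def[abs_def]
  by measurable

lemma sum5: "(\<Sum>i<(5::nat). f i) = f 0 + f 1 + f 2 + f 3 + (f 4 :: real)"
  by (simp add: eval_nat_numeral)

lemma DA:
  assumes hint: "integrable lborel h" and hneg: "\<And>x. x < 0 \<Longrightarrow> h x = 0"
  shows "(\<integral>\<omega>. indicator EA \<omega> * (\<Sum>i<5. h (\<omega> i) * R i \<omega>) \<partial>Q)
       = (\<integral>s. h s * pA0 s \<partial>lborel) + 3 * (\<integral>s. h s * pA1 s \<partial>lborel) + (\<integral>s. h s * pA4 s \<partial>lborel)"
proof -
  have ph0: "\<And>s. 0 \<le> s \<Longrightarrow> (\<integral>\<^sup>+x. ennreal (indicator EA (x(0:=s)) * R 0 x) \<partial>PiM ({..<5}-{0}) (\<lambda>_. lborel)) = ennreal (pA0 s)"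
    using phiEA[of 0] PA0 by (simp add: pA0_def R_def)
  have ph1: "\<And>s. 0 \<le> s \<Longrightarrow> (\<integral>\<^sup>+x. ennreal (indicator EA (x(1:=s)) * R 1 x) \<partial>PiM ({..<5}-{1}) (\<lambda>_. lborel)) = ennreal (pA1 s)"
    using phiEA[of 1] PA1[of 1 2 3] by (simp add: pA1_def)
  have ph2: "\<And>s. 0 \<le> s \<Longrightarrow> (\<integral>\<^sup>+x. ennreal (indicator EA (x(2:=s)) * R 2 x) \<partial>PiM ({..<5}-{2}) (\<lambda>_. lborel)) = ennreal (pA1 s)"
    using phiEA[of 2] PA1[of 2 1 3] by (simp add: pA1_def)
  have ph3: "\<And>s. 0 \<le> s \<Longrightarrow> (\<integral>\<^sup>+x. ennreal (indicator EA (x(3:=s)) * R 3 x) \<partial>PiM ({..<5}-{3}) (\<lambda>_. lborel)) = ennreal (pA1 s)"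
    using phiEA[of 3] PA1[of 3 1 2] by (simp add: pA1_def)
  have ph4: "\<And>s. 0 \<le> s \<Longrightarrow> (\<integral>\<^sup>+x. ennreal (indicator EA (x(4:=s)) * R 4 x) \<partial>PiM ({..<5}-{4}) (\<lambda>_. lborel)) = ennreal (pA4 s)"
    using phiEA[of 4] PA4 by (simp add: pA4_def)
  have T0: "integrable Q (\<lambda>\<omega>. indicator EA \<omega> * (h (\<omega> 0) * R 0 \<omega>))" "(\<integral>\<omega>. indicator EA \<omega> * (h (\<omega> 0) * R 0 \<omega>) \<partial>Q) = (\<integral>s. h s * pA0 s \<partial>lborel)"
    using KL[OF _ EA_sets hint hneg pmeas(1) pbounds(1,2) ph0] by simp_all
  have T1: "integrable Q (\<lambda>\<omega>. indicator EA \<omega> * (h (\<omega> 1) * R 1 \<omega>))" "(\<integral>\<omega>. indicator EA \<omega> * (h (\<omega> 1) * R 1 \<omega>) \<partial>Q) = (\<integral>s. h s * pA1 s \<partial>lborel)"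
    using KL[OF _ EA_sets hint hneg pmeas(2) pbounds(3,4) ph1] by simp_all
  have T2: "integrable Q (\<lambda>\<omega>. indicator EA \<omega> * (h (\<omega> 2) * R 2 \<omega>))" "(\<integral>\<omega>. indicator EA \<omega> * (h (\<omega> 2) * R 2 \<omega>) \<partial>Q) = (\<integral>s. h s * pA1 s \<partial>lborel)"
    using KL[OF _ EA_sets hint hneg pmeas(2) pbounds(3,4) ph2] by simp_all
  have T3: "integrable Q (\<lambda>\<omega>. indicator EA \<omega> * (h (\<omega> 3) * R 3 \<omega>))" "(\<integral>\<omega>. indicator EA \<omega> * (h (\<omega> 3) * R 3 \<omega>) \<partial>Q) = (\<integral>s. h s * pA1 s \<partial>lborel)"
    using KL[OF _ EA_sets hint hneg pmeas(2) pbounds(3,4) ph3] by simp_all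
  have T4: "integrable Q (\<lambda>\<omega>. indicator EA \<omega> * (h (\<omega> 4) * R 4 \<omega>))" "(\<integral>\<omega>. indicator EA \<omega> * (h (\<omega> 4) * R 4 \<omega>) \<partial>Q) = (\<integral>s. h s * pA4 s \<partial>lborel)"
    using KL[OF _ EA_sets hint hneg pmeas(3) pbounds(5,6) ph4] by simp_all
  have "(\<integral>\<omega>. indicator EA \<omega> * (\<Sum>i<5. h (\<omega> i) * R i \<omega>) \<partial>Q) = (\<integral>\<omega>. (\<Sum>i<5. indicator EA \<omega> * (h (\<omega> i) * R i \<omega>)) \<partial>Q)"
    by (simp add: sum_distrib_left)
  also have "\<dots> = (\<Sum>i<5. (\<integral>\<omega>. indicator EA \<omega> * (h (\<omega> i) * R i \<omega>) \<partial>Q))"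
  proof (rule Bochner_Integration.integral_sum[where f="\<lambda>i \<omega>. indicator EA \<omega> * (h (\<omega> i) * R i \<omega>)"])
    fix i assume "i \<in> {..<5::nat}"
    then have "i = 0 \<or> i = 1 \<or> i = 2 \<or> i = 3 \<or> i = 4" by auto
    then show "integrable Q (\<lambda>\<omega>. indicator EA \<omega> * (h (\<omega> i) * R i \<omega>))" using T0 T1 T2 T3 T4 by auto
  qed
  also have "\<dots> = (\<integral>s. h s * pA0 s \<partial>lborel) + 3 * (\<integral>s. h s * pA1 s \<partial>lborel) + (\<integral>s. h s * pA4 s \<partial>lborel)"
    unfolding sum5 T0(2) T1(2) T2(2) T3(2) T4(2) by simp
  finally show ?thesis .
qed

lemma DB:
  assumes hint: "integrable lborel h" and hneg: "\<And>x. x < 0 \<Longrightarrow> h x = 0"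
  shows "(\<integral>\<omega>. indicator EB \<omega> * (\<Sum>i<5. h (\<omega> i) * R i \<omega>) \<partial>Q)
       = (\<integral>s. h s * pB0 s \<partial>lborel) + 3 * (\<integral>s. h s * pB1 s \<partial>lborel) + (\<integral>s. h s * pB4 s \<partial>lborel)"
proof -
  have ph0: "\<And>s. 0 \<le> s \<Longrightarrow> (\<integral>\<^sup>+x. ennreal (indicator EB (x(0:=s)) * R 0 x) \<partial>PiM ({..<5}-{0}) (\<lambda>_. lborel)) = ennreal (pB0 s)"
    using phiEB[of 0] PB0 by (simp add: pB0_def)
  have ph1: "\<And>s. 0 \<le> s \<Longrightarrow> (\<integral>\<^sup>+x. ennreal (indicator EB (x(1:=s)) * R 1 x) \<partial>PiM ({..<5}-{1}) (\<lambda>_. lborel)) = ennreal (pB1 s)"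
    using phiEB[of 1] PB1[of 1 2 3] by (simp add: pB1_def)
  have ph2: "\<And>s. 0 \<le> s \<Longrightarrow> (\<integral>\<^sup>+x. ennreal (indicator EB (x(2:=s)) * R 2 x) \<partial>PiM ({..<5}-{2}) (\<lambda>_. lborel)) = ennreal (pB1 s)"
    using phiEB[of 2] PB1[of 2 1 3] by (simp add: pB1_def)
  have ph3: "\<And>s. 0 \<le> s \<Longrightarrow> (\<integral>\<^sup>+x. ennreal (indicator EB (x(3:=s)) * R 3 x) \<partial>PiM ({..<5}-{3}) (\<lambda>_. lborel)) = ennreal (pB1 s)"
    using phiEB[of 3] PB1[of 3 1 2] by (simp add: pB1_def)
  have ph4: "\<And>s. 0 \<le> s \<Longrightarrow> (\<integral>\<^sup>+x. ennreal (indicator EB (x(4:=s)) * R 4 x) \<partial>PiM ({..<5}-{4}) (\<lambda>_. lborel)) = ennreal (pB4 s)"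
    using phiEB[of 4] PB4 by (simp add: pB4_def)
  have T0: "integrable Q (\<lambda>\<omega>. indicator EB \<omega> * (h (\<omega> 0) * R 0 \<omega>))" "(\<integral>\<omega>. indicator EB \<omega> * (h (\<omega> 0) * R 0 \<omega>) \<partial>Q) = (\<integral>s. h s * pB0 s \<partial>lborel)"
    using KL[OF _ EB_sets hint hneg pmeas(4) pbounds(7,8) ph0] by simp_all
  have T1: "integrable Q (\<lambda>\<omega>. indicator EB \<omega> * (h (\<omega> 1) * R 1 \<omega>))" "(\<integral>\<omega>. indicator EB \<omega> * (h (\<omega> 1) * R 1 \<omega>) \<partial>Q) = (\<integral>s. h s * pB1 s \<partial>lborel)"
    using KL[OF _ EB_sets hint hneg pmeas(5) pbounds(9,10) ph1] by simp_all
  have T2: "integrable Q (\<lambda>\<omega>. indicator EB \<omega> * (h (\<omega> 2) * R 2 \<omega>))" "(\<integral>\<omega>. indicator EB \<omega> * (h (\<omega> 2) * R 2 \<omega>) \<partial>Q) = (\<integral>s. h s * pB1 s \<partial>lborel)"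
    using KL[OF _ EB_sets hint hneg pmeas(5) pbounds(9,10) ph2] by simp_all
  have T3: "integrable Q (\<lambda>\<omega>. indicator EB \<omega> * (h (\<omega> 3) * R 3 \<omega>))" "(\<integral>\<omega>. indicator EB \<omega> * (h (\<omega> 3) * R 3 \<omega>) \<partial>Q) = (\<integral>s. h s * pB1 s \<partial>lborel)"
    using KL[OF _ EB_sets hint hneg pmeas(5) pbounds(9,10) ph3] by simp_all
  have T4: "integrable Q (\<lambda>\<omega>. indicator EB \<omega> * (h (\<omega> 4) * R 4 \<omega>))" "(\<integral>\<omega>. indicator EB \<omega> * (h (\<omega> 4) * R 4 \<omega>) \<partial>Q) = (\<integral>s. h s * pB4 s \<partial>lborel)"
    using KL[OF _ EB_sets hint hneg pmeas(6) pbounds(11,12) ph4] by simp_all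
  have "(\<integral>\<omega>. indicator EB \<omega> * (\<Sum>i<5. h (\<omega> i) * R i \<omega>) \<partial>Q) = (\<integral>\<omega>. (\<Sum>i<5. indicator EB \<omega> * (h (\<omega> i) * R i \<omega>)) \<partial>Q)"
    by (simp add: sum_distrib_left)
  also have "\<dots> = (\<Sum>i<5. (\<integral>\<omega>. indicator EB \<omega> * (h (\<omega> i) * R i \<omega>) \<partial>Q))"
  proof (rule Bochner_Integration.integral_sum[where f="\<lambda>i \<omega>. indicator EB \<omega> * (h (\<omega> i) * R i \<omega>)"])
    fix i assume "i \<in> {..<5::nat}"
    then have "i = 0 \<or> i = 1 \<or> i = 2 \<or> i = 3 \<or> i = 4" by auto
    then show "integrable Q (\<lambda>\<omega>. indicator EB \<omega> * (h (\<omega> i) * R i \<omega>))" using T0 T1 T2 T3 T4 by auto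
  qed
  also have "\<dots> = (\<integral>s. h s * pB0 s \<partial>lborel) + 3 * (\<integral>s. h s * pB1 s \<partial>lborel) + (\<integral>s. h s * pB4 s \<partial>lborel)"
    unfolding sum5 T0(2) T1(2) T2(2) T3(2) T4(2) by simp
  finally show ?thesis .
qed

lemma dens0: "PiM {..<5} (\<lambda>_. density lborel (\<lambda>x. ennreal (ex x))) = density Q (\<lambda>\<omega>. \<Prod>j\<in>{..<5}. ennreal (ex (\<omega> j)))"
  by (rule PiM_dens) (auto simp: nn_ex)

lemma prob_dens:
  assumes E: "E \<in> sets Q" and i: "p \<in> borel_measurable borel"
    and ph: "\<And>s. 0 \<le> s \<Longrightarrow> (\<integral>\<^sup>+x. ennreal (indicator E (x(0:=s)) * R 0 x) \<partial>PiM ({..<5}-{0}) (\<lambda>_. lborel)) = ennreal (p s)"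
  shows "emeasure (density Q (\<lambda>\<omega>. \<Prod>j\<in>{..<5}. ennreal (ex (\<omega> j)))) E = (\<integral>\<^sup>+s. ennreal (ex s * p s) \<partial>lborel)"
proof -
  have "emeasure (density Q (\<lambda>\<omega>. \<Prod>j\<in>{..<5}. ennreal (ex (\<omega> j)))) E = (\<integral>\<^sup>+\<omega>. (\<Prod>j\<in>{..<5}. ennreal (ex (\<omega> j))) * indicator E \<omega> \<partial>Q)"
    by (rule emeasure_density) (use E in auto)
  also have "\<dots> = (\<integral>\<^sup>+\<omega>. ennreal (indicator E \<omega> * (ex (\<omega> 0) * R 0 \<omega>)) \<partial>Q)"
  proof (intro nn_integral_cong)
    fix \<omega> :: "nat \<Rightarrow> real"
    have "(\<Prod>j\<in>{..<5}. ex (\<omega> j)) = ex (\<omega> 0) * R 0 \<omega>" unfolding R_def by (subst prod.remove[of _ 0]) auto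
    then have "(\<Prod>j\<in>{..<5}. ennreal (ex (\<omega> j))) = ennreal (ex (\<omega> 0) * R 0 \<omega>)"
      by (simp add: prod_ennreal)
    then show "(\<Prod>j\<in>{..<5}. ennreal (ex (\<omega> j))) * indicator E \<omega> = ennreal (indicator E \<omega> * (ex (\<omega> 0) * R 0 \<omega>))"
      by (simp add: indicator_def)
  qed
  also have "\<dots> = (\<integral>\<^sup>+s. ennreal (ex s * p s) \<partial>lborel)"
    by (rule KLN[OF _ E ex_meas ex_nonneg _ ph]) (auto simp: ex_def)
  finally show ?thesis .
qed

lemma probA0: "measure (density Q (\<lambda>\<omega>. \<Prod>j\<in>{..<5}. ennreal (ex (\<omega> j)))) EA = 1/4"
proof -
  have ph0: "\<And>s. 0 \<le> s \<Longrightarrow> (\<integral>\<^sup>+x. ennreal (indicator EA (x(0:=s)) * R 0 x) \<partial>PiM ({..<5}-{0}) (\<lambda>_. lborel)) = ennreal (pA0 s)"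
    using phiEA[of 0] PA0 by (simp add: pA0_def R_def)
  have "emeasure (density Q (\<lambda>\<omega>. \<Prod>j\<in>{..<5}. ennreal (ex (\<omega> j)))) EA = (\<integral>\<^sup>+s. ennreal (ex s * pA0 s) \<partial>lborel)"
    by (rule prob_dens[OF EA_sets pmeas(1) ph0])
  also have "\<dots> = (\<integral>\<^sup>+s. ennreal (ex s) * ennreal (1/4) \<partial>lborel)"
    by (intro nn_integral_cong) (simp add: pA0_def ennreal_mult'[symmetric])
  also have "\<dots> = ennreal (1/4)" by (simp add: nn_integral_multc nn_ex)
  finally show ?thesis by (simp add: measure_def)
qed

lemma probB0: "measure (density Q (\<lambda>\<omega>. \<Prod>j\<in>{..<5}. ennreal (ex (\<omega> j)))) EB = 1/4"
proof -
  have ph0: "\<And>s. 0 \<le> s \<Longrightarrow> (\<integral>\<^sup>+x. ennreal (indicator EB (x(0:=s)) * R 0 x) \<partial>PiM ({..<5}-{0}) (\<lambda>_. lborel)) = ennreal (pB0 s)"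
    using phiEB[of 0] PB0 by (simp add: pB0_def)
  have "emeasure (density Q (\<lambda>\<omega>. \<Prod>j\<in>{..<5}. ennreal (ex (\<omega> j)))) EB = (\<integral>\<^sup>+s. ennreal (ex s * pB0 s) \<partial>lborel)"
    by (rule prob_dens[OF EB_sets pmeas(4) ph0])
  also have "\<dots> = (\<integral>\<^sup>+s. ennreal (exp (-s) * exp (-s) / 2 * indicator {0..} s) \<partial>lborel)"
    by (intro nn_integral_cong) (simp add: pB0_def ex_def)
  also have "\<dots> = ennreal (0 - (- exp (- 0) * exp (- 0) / 4))"
  proof (rule FTC_ray[where F="\<lambda>s. - exp (-s) * exp (-s) / 4"])
    fix s :: real
    show "((\<lambda>s. - exp (-s) * exp (-s) / 4) has_real_derivative exp (-s) * exp (-s) / 2) (at s)"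
      by (rule derivative_eq_intros refl | simp)+
  next
    show "((\<lambda>s::real. - exp (-s) * exp (-s) / 4) \<longlongrightarrow> 0) at_top" by real_asymp
  qed auto
  finally show ?thesis by (simp add: measure_def)
qed


lemma intp: fixes h p :: "real \<Rightarrow> real" assumes "integrable lborel h" "\<And>x. x < 0 \<Longrightarrow> h x = 0" "p \<in> borel_measurable borel"
  "\<And>s. 0 \<le> s \<Longrightarrow> 0 \<le> p s" "\<And>s. 0 \<le> s \<Longrightarrow> p s \<le> 1"
  shows "integrable lborel (\<lambda>s. h s * p s)"
proof (rule Bochner_Integration.integrable_bound[OF assms(1)])
  show "(\<lambda>s. h s * p s) \<in> borel_measurable lborel" using assms(1,3) by measurable
  show "AE x in lborel. norm (h x * p x) \<le> norm (h x)"
  proof (rule AE_I2)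
    fix x :: real
    show "norm (h x * p x) \<le> norm (h x)"
    proof (cases "0 \<le> x")
      case True then show ?thesis using assms(4,5)[of x] by (simp add: abs_mult mult_left_le)
    next
      case False then show ?thesis using assms(2) by simp
    qed
  qed
qed

lemma exp_pow: "exp (- (real k * s)) = exp (-s) ^ k"
  by (simp add: exp_of_nat_mult[symmetric])

theorem lemma2:
  fixes g :: "real \<Rightarrow> real \<Rightarrow> real" and h :: "real \<Rightarrow> real"
  assumes meas: "\<And>\<theta>. \<theta> \<ge> 0 \<Longrightarrow> (\<lambda>x. g x \<theta>) \<in> borel_measurable borel"
    and nonneg: "\<And>x \<theta>. \<theta> \<ge> 0 \<Longrightarrow> g x \<theta> \<ge> 0"
    and support: "\<And>x \<theta>. \<theta> \<ge> 0 \<Longrightarrow> x < 0 \<Longrightarrow> g x \<theta> = 0"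
    and total: "\<And>\<theta>. \<theta> \<ge> 0 \<Longrightarrow> (\<integral>\<^sup>+ x. ennreal (g x \<theta>) \<partial>lborel) = 1"
    and g0: "\<And>x. x \<ge> 0 \<Longrightarrow> g x 0 = exp (- x)"
    and hderiv: "\<And>x. ((\<lambda>\<theta>. g x \<theta>) has_real_derivative h x) (at_right 0)"
    and hint: "integrable lborel h"
    and diffA: "((\<lambda>\<theta>. prob5 g \<theta> evA) has_real_derivative
                  (\<integral>\<omega>. indicator evA \<omega> * dens_deriv g h \<omega> \<partial>(PiM {..<5} (\<lambda>_. lborel))))
                (at_right 0)"
    and diffB: "((\<lambda>\<theta>. prob5 g \<theta> evB) has_real_derivative
                  (\<integral>\<omega>. indicator evB \<omega> * dens_deriv g h \<omega> \<partial>(PiM {..<5} (\<lambda>_. lborel))))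
                (at_right 0)"
  shows "(\<lambda>\<theta>. bfun g \<theta> - 5 * \<theta> * (\<integral>x\<in>{0..}. psi x * h x \<partial>lborel))
           \<in> o[at_right 0](\<lambda>\<theta>. \<theta>)"
proof -
  have gex: "g x 0 = ex x" for x
    by (cases "0 \<le> x") (simp_all add: ex_def g0 support)
  have hneg: "h x = 0" if x: "x < 0" for x
  proof -
    have "((\<lambda>y. (g x y - g x 0) / (y - 0)) \<longlongrightarrow> h x) (at_right 0)"
      using hderiv[of x, unfolded has_field_derivative_iff] .
    moreover have "((\<lambda>y. (g x y - g x 0) / (y - 0)) \<longlongrightarrow> 0) (at_right 0)"
    proof (rule tendsto_eventually)
      show "\<forall>\<^sub>F y in at_right 0. (g x y - g x 0) / (y - 0) = 0"
        using eventually_at_right_less[of "0::real"] by (rule eventually_mono) (simp add: support x)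
    qed
    ultimately show "h x = 0" using tendsto_unique[of "at_right (0::real)"] by auto
  qed
  have dd: "dens_deriv g h \<omega> = (\<Sum>i<5. h (\<omega> i) * R i \<omega>)" for \<omega>
    by (simp add: dens_deriv_def R_def gex)
  define I where "I = (\<integral>x\<in>{0..}. psi x * h x \<partial>lborel)"
  define D where "D = (\<integral>\<omega>. indicator evA \<omega> * dens_deriv g h \<omega> \<partial>Q) - (\<integral>\<omega>. indicator evB \<omega> * dens_deriv g h \<omega> \<partial>Q)"
  have DA': "(\<integral>\<omega>. indicator evA \<omega> * dens_deriv g h \<omega> \<partial>Q) = (\<integral>\<omega>. indicator EA \<omega> * (\<Sum>i<5. h (\<omega> i) * R i \<omega>) \<partial>Q)"
    by (intro Bochner_Integration.integral_cong) (simp_all add: EA_eq dd)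
  have DB': "(\<integral>\<omega>. indicator evB \<omega> * dens_deriv g h \<omega> \<partial>Q) = (\<integral>\<omega>. indicator EB \<omega> * (\<Sum>i<5. h (\<omega> i) * R i \<omega>) \<partial>Q)"
    by (intro Bochner_Integration.integral_cong) (simp_all add: EB_eq dd)
  have iA0: "integrable lborel (\<lambda>s. h s * pA0 s)" by (rule intp[OF hint hneg pmeas(1) pbounds(1,2)])
  have iA1: "integrable lborel (\<lambda>s. h s * pA1 s)" by (rule intp[OF hint hneg pmeas(2) pbounds(3,4)])
  have iA4: "integrable lborel (\<lambda>s. h s * pA4 s)" by (rule intp[OF hint hneg pmeas(3) pbounds(5,6)])
  have iB0: "integrable lborel (\<lambda>s. h s * pB0 s)" by (rule intp[OF hint hneg pmeas(4) pbounds(7,8)])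
  have iB1: "integrable lborel (\<lambda>s. h s * pB1 s)" by (rule intp[OF hint hneg pmeas(5) pbounds(9,10)])
  have iB4: "integrable lborel (\<lambda>s. h s * pB4 s)" by (rule intp[OF hint hneg pmeas(6) pbounds(11,12)])
  have pw: "h s * (5 * psi s) = h s * pA0 s + 3 * (h s * pA1 s) + h s * pA4 s - (h s * pB0 s + 3 * (h s * pB1 s) + h s * pB4 s)" for s
  proof (cases "0 \<le> s")
    case True
    have "exp (- (3 * s)) = exp (-s)^3" using exp_pow[of 3 s] by simp
    moreover have "exp (- (2 * s)) = exp (-s)^2" using exp_pow[of 2 s] by simp
    ultimately show ?thesis
      by (simp add: psi_def pA0_def pA1_def pA4_def pB0_def pB1_def pB4_def algebra_simps power2_eq_square power3_eq_cube)
  next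
    case False then show ?thesis using hneg[of s] by simp
  qed
  have "D = (\<integral>s. h s * pA0 s \<partial>lborel) + 3 * (\<integral>s. h s * pA1 s \<partial>lborel) + (\<integral>s. h s * pA4 s \<partial>lborel)
          - ((\<integral>s. h s * pB0 s \<partial>lborel) + 3 * (\<integral>s. h s * pB1 s \<partial>lborel) + (\<integral>s. h s * pB4 s \<partial>lborel))"
    using DA[OF hint hneg] DB[OF hint hneg] by (simp add: D_def DA' DB')
  also have "\<dots> = (\<integral>s. h s * pA0 s + 3 * (h s * pA1 s) + h s * pA4 s - (h s * pB0 s + 3 * (h s * pB1 s) + h s * pB4 s) \<partial>lborel)"
    using iA0 iA1 iA4 iB0 iB1 iB4 by simp
  also have "\<dots> = (\<integral>s. h s * (5 * psi s) \<partial>lborel)" unfolding pw ..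
  also have "\<dots> = 5 * I"
  proof -
    have "I = (\<integral>x. psi x * h x \<partial>lborel)"
      unfolding I_def set_lebesgue_integral_def
      by (intro Bochner_Integration.integral_cong) (auto simp: hneg indicator_def)
    moreover have "(\<integral>s. h s * (5 * psi s) \<partial>lborel) = (\<integral>s. 5 * (psi s * h s) \<partial>lborel)"
      by (simp add: mult_ac)
    moreover have "(\<integral>s. 5 * (psi s * h s) \<partial>lborel) = 5 * (\<integral>s. psi s * h s \<partial>lborel)"
      by (rule integral_mult_right_zero)
    ultimately show ?thesis by simp
  qed
  finally have Dval: "D = 5 * I" .
  have deriv: "((\<lambda>\<theta>. bfun g \<theta>) has_real_derivative D) (at_right 0)"
    unfolding bfun_def D_def by (rule DERIV_diff[OF diffA diffB])
  have gfun: "(\<lambda>x. ennreal (g x 0)) = (\<lambda>x. ennreal (ex x))" by (simp add: gex)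
  have S0: "sample5 g 0 = density Q (\<lambda>\<omega>. \<Prod>j\<in>{..<5}. ennreal (ex (\<omega> j)))"
    unfolding sample5_def gfun dens0 ..
  have eA: "evA \<inter> space Q = EA" by (auto simp: EA_def evA_def)
  have eB: "evB \<inter> space Q = EB" by (auto simp: EB_def evB_def)
  have b0: "bfun g 0 = 0"
    unfolding bfun_def prob5_def S0 by (simp add: eA eB probA0 probB0)
  have lim: "((\<lambda>y. bfun g y / y) \<longlongrightarrow> D) (at_right 0)"
    using deriv[unfolded has_field_derivative_iff] by (simp add: b0)
  have lim2: "((\<lambda>y. (bfun g y - 5 * y * I) / y) \<longlongrightarrow> 0) (at_right 0)"
  proof -
    have "((\<lambda>y. bfun g y / y - 5 * I) \<longlongrightarrow> D - 5 * I) (at_right 0)"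
      by (intro tendsto_diff lim tendsto_const)
    then have "((\<lambda>y. bfun g y / y - 5 * I) \<longlongrightarrow> 0) (at_right 0)" by (simp add: Dval)
    then show ?thesis
    proof (rule Lim_transform_eventually)
      show "\<forall>\<^sub>F y in at_right 0. bfun g y / y - 5 * I = (bfun g y - 5 * y * I) / y"
        using eventually_at_right_less[of "0::real"] by (rule eventually_mono) (simp add: field_simps)
    qed
  qed
  show ?thesis
    unfolding I_def[symmetric]
    by (rule smalloI_tendsto[OF lim2]) (use eventually_at_right_less[of "0::real"] in \<open>auto elim: eventually_mono\<close>)
qed

end
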